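(* Let $J=\{j_0,\dots,j_{p-1}\}\subset\mathbf Z_p$ with $j_i\equiv i\pmod p$ for all $i$, and let $v_r$ be a basis of the one-dimensional representation $(\omega^r\otimes1)\otimes(\chi\circ\det)$ of $\mathrm B\cap\mathrm K\mathrm Z$. (1) If $r=0$: $\pi_W\Big(\begin{pmatrix}1&0\\0&p\end{pmatrix}[1,v_0]+\sum_{j\in J}\begin{pmatrix}p&j\\0&1\end{pmatrix}[1,v_0]\Big)=0$. (2) If $r\ge1$: $\pi_W\Big(\sum_{j\in J}(-j)^k\begin{pmatrix}p&j\\0&1\end{pmatrix}[1,v_r]\Big)=0$ for every $k\in\{0,\dots,r-1\}$. (3) If $r\ge1$ and $\lambda_0,\dots,\lambda_{p-1}\in k$ satisfy $\sum_{i=0}^{p-1}i^\ell\lambda_i=0$ for all $0\le\ell\le r-1$, then $$\pi_W\Big(\sum_{i=0}^{p-1}\lambda_ii^r[1,v_r]+\sum_{i=0}^{p-1}\lambda_i\begin{pmatrix}1&i\\0&1\end{pmatrix}\begin{pmatrix}1&0\\0&p^{-1}\end{pmatrix}\sum_{j\in J}(-j)^r\begin{pmatrix}p&j\\0&1\end{pmatrix}[1,v_r]\Big)=0.$$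
   Context: $p$ prime, $k$ finite extension of $\mathbf F_p$, $r\in\{0,\dots,p-1\}$, $\chi=\omega^s\mu_\lambda$ ($\lambda\in k^\times$), also viewed as characters of $\mathbf Q_p^\times$: $\omega(a)=ap^{-\mathrm{val}(a)}\bmod p$, $\mu_\lambda(a)=\lambda^{\mathrm{val}(a)}$. $\mathrm G=\mathrm{GL}_2(\mathbf Q_p)$, $\mathrm B$ upper triangular Borel, $\mathrm K=\mathrm{GL}_2(\mathbf Z_p)$, $\mathrm Z$ the centre. $\omega^r\otimes1$ is the character $\begin{pmatrix}a&b\\0&d\end{pmatrix}\mapsto\omega^r(a)$ of $\mathrm B\cap\mathrm K\mathrm Z$. For a representation $V$ of $\mathrm B\cap\mathrm K\mathrm Z$, $\mathrm{ind}_{\mathrm B\cap\mathrm K\mathrm Z}^{\mathrm B}V$ is compact induction and $[b,v]$ the function with $[b,v](g)=gb\cdot v$ if $gb\in\mathrm B\cap\mathrm K\mathrm Z$, $0$ otherwise; $\mathrm B$ acts by right translation ($b'\cdot[b,v]=[b'b,v]$). $W=\rho(r,\chi)=\mathrm{ind}(\omega_2^{r+1})\otimes\chi$, with $\mathrm{ind}(\omega_2^{r+1})$ the irreducible 2-dimensional representation of $\mathcal G_{\mathbf Q_p}$ with determinant $\omega^{r+1}$ and restriction to inertia $\omega_2^{r+1}\oplus\omega_2^{p(r+1)}$. $\mathrm D(W)$ is its étale $(\phi,\Gamma)$-module over $k(\!(X)\!)$ ($\phi(X)=(1+X)^p-1$, $\gamma(X)=(1+X)^{\chi_{\mathrm{cycl}}(\gamma)}-1$),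 with basis $e,f$: $\phi(e)=\lambda f$, $\phi(f)=-\lambda X^{-(r+1)(p-1)}e$, $\gamma(e)=\omega(\gamma)^sf_\gamma^{(r+1)/(p+1)}e$, $\gamma(f)=\omega(\gamma)^sf_\gamma^{p(r+1)/(p+1)}f$, $f_\gamma(X)=\omega(\gamma)X/\gamma(X)$. $\psi$: on $k(\!(X)\!)$, $\psi(\sum_{i=0}^{p-1}(1+X)^i\phi(a_i))=a_0$; on $\mathrm D(W)$, $\psi(\sum a_i\phi(d_i))=\sum\psi(a_i)d_i$. $\mathrm D^\sharp(W)=k[\![X]\!]e\oplus X^rk[\![X]\!]f$ (Colmez's largest $\psi$-stable lattice on which $\psi$ is surjective). $\varprojlim_\psi\mathrm D^\sharp(W)$ = sequences $(v_i)_{i\ge0}$ in $\mathrm D^\sharp(W)$ with $\psi(v_{i+1})=v_i$, with $\mathrm B$-action: $(\mathrm{diag}(x,x)\star v)_i=(\omega^r\chi^2)^{-1}(x)v_i$; $(\mathrm{diag}(1,p^j)\star v)_i=v_{i-j}$ (i.e. $\psi^{j-i}(v_0)$ if $i<j$); $(\mathrm{diag}(1,a)\star v)_i=\gamma_a^{-1}(v_i)$ for $a\in\mathbf Z_p^\times$ with $\chi_{\mathrm{cycl}}(\gamma_a)=a$; $(\begin{pmatrix}1&z\\0&1\end{pmatrix}\star v)_i=\psi^j((1+X)^{p^{i+j}z}v_{i+j})$ for $i+j\ge-\mathrm{val}(z)$. $\Omega(W)$ is its continuous $k$-dual with $(g\star\theta)(y)=\theta(g^{-1}\star y)$. $\theta\in\Omega(W)$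 is $y\mapsto\alpha_0(0)$ where $y_0=\alpha_0e+\beta_0X^rf$; it satisfies $b\star\theta=\chi(ad)\omega^r(a)\theta$ for $b=\begin{pmatrix}a&*\\0&d\end{pmatrix}\in\mathrm B\cap\mathrm K\mathrm Z$. $\pi_W:\mathrm{ind}_{\mathrm B\cap\mathrm K\mathrm Z}^{\mathrm B}(\omega^r\otimes1)\otimes(\chi\circ\det)\to\Omega(W)$ is the $\mathrm B$-equivariant map with $\pi_W([1,v_r])=\theta$. *)

theory Defs
  imports "HOL-Computational_Algebra.Formal_Laurent_Series" "HOL-Library.Product_Plus"
begin

text \<open>p-adic integers Z_p, represented by compatible residues z n in [0, p^n).\<close>
definition padic_int :: "nat \<Rightarrow> (nat \<Rightarrow> int) set" where
  "padic_int p = {z. (\<forall>n. 0 \<le> z n \<and> z n < int p ^ n) \<and> (\<forall>n. z (Suc n) mod int p ^ n = z n)}"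

definition padic_of_int :: "nat \<Rightarrow> int \<Rightarrow> (nat \<Rightarrow> int)" where
  "padic_of_int p a = (\<lambda>n. a mod int p ^ n)"

definition padic_neg :: "nat \<Rightarrow> (nat \<Rightarrow> int) \<Rightarrow> (nat \<Rightarrow> int)" where
  "padic_neg p z = (\<lambda>n. (- z n) mod int p ^ n)"

definition padic_mult_ppow :: "nat \<Rightarrow> nat \<Rightarrow> (nat \<Rightarrow> int) \<Rightarrow> (nat \<Rightarrow> int)" where
  "padic_mult_ppow p i z = (\<lambda>n. (int p ^ i * z n) mod int p ^ n)"

text \<open>(1+X)^z in k[[X]] for z in Z_p (char k = p): coefficient of X^m is binom(z,m) mod p,
  computed from z mod p^(m+1) (which exceeds m).\<close>
definition binom_pow :: "(nat \<Rightarrow> int) \<Rightarrow> 'k::field fps" where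
  "binom_pow z = Abs_fps (\<lambda>m. of_nat (nat (z (Suc m)) choose m))"

definition phi_fls :: "nat \<Rightarrow> 'k::field fls \<Rightarrow> 'k fls" where
  "phi_fls p F = fls_compose_fps F ((1 + fps_X) ^ p - 1)"

definition psi_fls :: "nat \<Rightarrow> 'k::field fls \<Rightarrow> 'k fls" where
  "psi_fls p F = (THE c. \<exists>a. F = (\<Sum>i<p. (1 + fls_X) ^ i * phi_fls p (a i)) \<and> c = a 0)"

text \<open>D(W) = k((X)) e + k((X)) f, the pair (a,b) standing for a e + b f.\<close>
type_synonym 'k Dmod = "'k fls \<times> 'k fls"

definition dsc :: "'k::field fls \<Rightarrow> 'k Dmod \<Rightarrow> 'k Dmod" where
  "dsc c v = (c * fst v, c * snd v)"

definition e_D :: "'k::field Dmod" where "e_D = (1, 0)"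
definition f_D :: "'k::field Dmod" where "f_D = (0, 1)"

definition phi_e :: "'k::field \<Rightarrow> 'k Dmod" where
  "phi_e lam = dsc (fls_const lam) f_D"
definition phi_f :: "nat \<Rightarrow> nat \<Rightarrow> 'k::field \<Rightarrow> 'k Dmod" where
  "phi_f p r lam = dsc (- fls_const lam * fls_X powi (- int ((r + 1) * (p - 1)))) e_D"

definition psi_D :: "nat \<Rightarrow> nat \<Rightarrow> 'k::field \<Rightarrow> 'k Dmod \<Rightarrow> 'k Dmod" where
  "psi_D p r lam x = (THE y. \<exists>c1 c2. x = dsc c1 (phi_e lam) + dsc c2 (phi_f p r lam)
        \<and> y = dsc (psi_fls p c1) e_D + dsc (psi_fls p c2) f_D)"

text \<open>D^sharp = k[[X]] e + X^r k[[X]] f\<close>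
definition Dsharp :: "nat \<Rightarrow> 'k::field Dmod set" where
  "Dsharp r = {(a, b). fls_subdegree a \<ge> 0 \<and> (b = 0 \<or> fls_subdegree b \<ge> int r)}"

definition projlim :: "nat \<Rightarrow> nat \<Rightarrow> 'k::field \<Rightarrow> (nat \<Rightarrow> 'k Dmod) set" where
  "projlim p r lam = {y. (\<forall>i. y i \<in> Dsharp r) \<and> (\<forall>i. psi_D p r lam (y (Suc i)) = y i)}"

text \<open>Action of generators of B on the projective limit.
  Central element diag(x,x), x = p^m u in Q_p^x (u a p-adic unit):
  omega(x) = u mod p, chi(x) = omega(x)^s lambda^m.\<close>
definition chi_Qp :: "nat \<Rightarrow> 'k::field \<Rightarrow> int \<times> (nat \<Rightarrow> int) \<Rightarrow> 'k" where
  "chi_Qp s lam x = (of_int (snd x 1)) ^ s * lam powi (fst x)"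

definition omega_Qp :: "int \<times> (nat \<Rightarrow> int) \<Rightarrow> 'k::field" where
  "omega_Qp x = of_int (snd x 1)"

definition act_center :: "nat \<Rightarrow> nat \<Rightarrow> 'k::field \<Rightarrow> int \<times> (nat \<Rightarrow> int)
    \<Rightarrow> (nat \<Rightarrow> 'k Dmod) \<Rightarrow> (nat \<Rightarrow> 'k Dmod)" where
  "act_center r s lam x y = (\<lambda>i. dsc (fls_const (inverse (omega_Qp x ^ r * (chi_Qp s lam x) ^ 2))) (y i))"

definition act_diag_ppow :: "nat \<Rightarrow> nat \<Rightarrow> 'k::field \<Rightarrow> int
    \<Rightarrow> (nat \<Rightarrow> 'k Dmod) \<Rightarrow> (nat \<Rightarrow> 'k Dmod)" where
  "act_diag_ppow p r lam j y = (\<lambda>i. if j \<le> int i then y (nat (int i - j))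
                                   else (psi_D p r lam ^^ nat (j - int i)) (y 0))"

text \<open>unipotent (1 z; 0 1) for z in Z_p (take j = 0 in the general formula)\<close>
definition act_unip :: "nat \<Rightarrow> (nat \<Rightarrow> int) \<Rightarrow> (nat \<Rightarrow> 'k::field Dmod) \<Rightarrow> (nat \<Rightarrow> 'k Dmod)" where
  "act_unip p z y = (\<lambda>i. dsc (fps_to_fls (binom_pow (padic_mult_ppow p i z))) (y i))"

definition theta :: "(nat \<Rightarrow> 'k::field Dmod) \<Rightarrow> 'k" where
  "theta y = fls_nth (fst (y 0)) 0"

text \<open>g^{-1} * y for g = (p j; 0 1): g^{-1} = p^{-1} diag(1,p) (1 -j; 0 1)\<close>
definition act_inv_pj :: "nat \<Rightarrow> nat \<Rightarrow> nat \<Rightarrow> 'k::field \<Rightarrow> (nat \<Rightarrow> int)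
    \<Rightarrow> (nat \<Rightarrow> 'k Dmod) \<Rightarrow> (nat \<Rightarrow> 'k Dmod)" where
  "act_inv_pj p r s lam j y =
     act_center r s lam (-1, padic_of_int p 1) (act_diag_ppow p r lam 1 (act_unip p (padic_neg p j) y))"

end

theory Submission
  imports Defs "HOL-Computational_Algebra.Primes"
begin
unbundle fps_syntax

lemma fps_compose_Xp_nth:
  assumes "p > 0"
  shows "(G oo (fps_X::'k::field fps)^p) $ t = (if p dvd t then G $ (t div p) else 0)"
proof -
  have "(G oo fps_X^p) $ t = (\<Sum>i\<in>{0..t}. G $ i * ((fps_X^p)^i) $ t)"
    by (simp add: fps_compose_nth)
  also have "\<dots> = (\<Sum>i\<in>{0..t}. if t = p*i then G $ i else 0)"
  proof (intro sum.cong refl)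
    fix i
    have "((fps_X::'k fps)^p)^i $ t = (if t = p*i then 1 else 0)"
      unfolding power_mult[symmetric] by (rule fps_X_power_nth)
    thus "G $ i * ((fps_X^p)^i) $ t = (if t = p*i then G $ i else 0)" by simp
  qed
  also have "\<dots> = (if p dvd t then G $ (t div p) else 0)"
  proof (cases "p dvd t")
    case True
    then obtain c where c: "t = p * c" by auto
    have "c \<le> t" using assms c by simp
    have "(\<Sum>i\<in>{0..t}. if t = p*i then G $ i else 0) = (\<Sum>i\<in>{0..t}. if i = c then G $ i else 0)"
      by (intro sum.cong refl) (use c assms in auto)
    also have "\<dots> = G $ c" using \<open>c \<le> t\<close> by simp
    finally show ?thesis using True c assms by simp
  next
    case False
    have "\<forall>i\<in>{0..t}. (if t = p*i then G $ i else 0) = 0" using False by auto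
    thus ?thesis using False by simp
  qed
  finally show ?thesis .
qed


lemma phi_X:
  assumes "prime p" "CHAR('k::field) = p"
  shows "(1 + fps_X :: 'k fps)^p - 1 = fps_X^p"
proof -
  have "prime CHAR('k fps)" using assms by simp
  hence "(fps_X + 1 :: 'k fps)^p = fps_X^p + 1^p"
    by (rule freshmans_dream) (simp add: assms)
  thus ?thesis by (simp add: add.commute)
qed

lemma phi_nth:
  fixes F :: "'k::field fls"
  assumes "prime p" "CHAR('k) = p"
  shows "phi_fls p F $$ n = (if int p dvd n then F $$ (n div int p) else 0)"
proof (cases "F = 0")
  case True thus ?thesis by (simp add: phi_fls_def)
next
  case False
  have p0: "p > 0" using assms prime_gt_0_nat by blast
  define s where "s = fls_subdegree F"
  define G where "G = fls_base_factor_to_fps F"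
  have "phi_fls p F = fls_compose_fps F (fps_X^p)"
    by (simp add: phi_fls_def phi_X[OF assms])
  also have "\<dots> = fps_to_fls (G oo fps_X^p) * fps_to_fls (fps_X^p) powi s"
    by (simp add: fls_compose_fps_def G_def s_def)
  also have "fps_to_fls ((fps_X::'k fps)^p) powi s = fls_X_intpow (int p * s)"
    by (simp add: fps_to_fls_power power_int_power)
  also have "fps_to_fls (G oo fps_X^p) * fls_X_intpow (int p * s) = fls_shift (-(int p * s)) (fps_to_fls (G oo fps_X^p))"
    by (rule fls_X_intpow_times_conv_shift(2))
  finally have eq: "phi_fls p F $$ n = fps_to_fls (G oo fps_X^p) $$ (n - int p * s)" by simp
  have Gn: "G $ k = F $$ (s + int k)" for k by (simp add: G_def s_def fls_base_factor_to_fps_nth add.commute)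
  show ?thesis
  proof (cases "int p dvd n")
    case True
    then obtain c where c: "n = int p * c" by auto
    show ?thesis
    proof (cases "c < s")
      case True
      hence "F $$ c = 0" by (simp add: s_def fls_eq0_below_subdegree)
      moreover have "n - int p * s < 0" using True c p0 by (simp add: algebra_simps)
      ultimately show ?thesis using eq c p0 by simp
    next
      case False
      have "n - int p * s = int p * (c - s)" using c by (simp add: algebra_simps)
      hence t: "nat (n - int p * s) = p * nat (c - s)"
        by (simp add: nat_mult_distrib)
      have "n - int p * s \<ge> 0" using False c p0 by (simp add: algebra_simps)
      hence "phi_fls p F $$ n = (G oo fps_X^p) $ (p * nat (c - s))" using eq t by simp
      also have "\<dots> = G $ nat (c - s)" using p0 by (simp add: fps_compose_Xp_nth)
      also have "\<dots> = F $$ c" using False Gn by simp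
      finally show ?thesis using c p0 by simp
    qed
  next
    case False
    show ?thesis
    proof (cases "n - int p * s < 0")
      case True thus ?thesis using eq False by simp
    next
      case nl: False
      have "\<not> p dvd nat (n - int p * s)"
      proof
        assume "p dvd nat (n - int p * s)"
        hence "int p dvd int (nat (n - int p * s))" by (simp only: int_dvd_int_iff)
        hence "int p dvd (n - int p * s)" using nl by simp
        hence "int p dvd (n - int p * s) + int p * s" by (intro dvd_add) auto
        thus False using False by simp
      qed
      thus ?thesis using eq False nl p0 by (simp add: fps_compose_Xp_nth)
    qed
  qed
qed



lemma Y_mult_nth:
  fixes G :: "'k::field fls"
  shows "((1 + fls_X)^i * G) $$ k = (\<Sum>l\<le>i. of_nat (i choose l) * G $$ (k - int l))"
proof -
  have "(1 + fls_X :: 'k fls)^i = (\<Sum>l\<le>i. of_nat (i choose l) * fls_X^l * 1^(i-l))"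
    using binomial_ring[of "fls_X::'k fls" 1 i] by (simp add: add.commute)
  hence "(1 + fls_X)^i * G = (\<Sum>l\<le>i. fls_const (of_nat (i choose l)) * (fls_X^l * G))"
    by (simp add: sum_distrib_right fls_of_nat mult.assoc)
  thus ?thesis by (simp add: fls_nth_sum fls_X_power_times_conv_shift)
qed

lemma Yphi_nth:
  fixes d :: "'k::field fls"
  assumes "prime p" "CHAR('k) = p" "i < p" "m < p"
  shows "((1 + fls_X)^i * phi_fls p d) $$ (int p * n + int m) = of_nat (i choose m) * d $$ n"
proof -
  have p0: "p > 0" using assms prime_gt_0_nat by blast
  have "((1 + fls_X)^i * phi_fls p d) $$ (int p * n + int m)
      = (\<Sum>l\<le>i. of_nat (i choose l) * phi_fls p d $$ (int p * n + int m - int l))"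
    by (rule Y_mult_nth)
  also have "\<dots> = (\<Sum>l\<le>i. if l = m then of_nat (i choose m) * d $$ n else 0)"
  proof (intro sum.cong refl)
    fix l assume l: "l \<in> {..i}"
    show "of_nat (i choose l) * phi_fls p d $$ (int p * n + int m - int l) =
          (if l = m then of_nat (i choose m) * d $$ n else 0)"
    proof (cases "l = m")
      case True thus ?thesis using p0 by (simp add: phi_nth[OF assms(1,2)])
    next
      case False
      have "\<not> int p dvd (int p * n + int m - int l)"
      proof
        assume "int p dvd (int p * n + int m - int l)"
        moreover have "int p * n + int m - int l = int p * n + (int m - int l)" by simp
        ultimately have "int p dvd (int m - int l)"
          using dvd_add_right_iff[of "int p" "int p * n" "int m - int l"] by simp
        moreover have "\<bar>int m - int l\<bar> < int p" using l assms by auto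
        moreover have "int m - int l \<noteq> 0" using False by simp
        ultimately show False using dvd_imp_le_int[of "int m - int l" "int p"] by simp
      qed
      thus ?thesis using False by (simp add: phi_nth[OF assms(1,2)])
    qed
  qed
  also have "\<dots> = of_nat (i choose m) * d $$ n"
    by (cases "m \<le> i") (auto simp: binomial_eq_0)
  finally show ?thesis .
qed

lemma psiT_Yphi:
  fixes d :: "'k::field fls"
  assumes "prime p" "CHAR('k) = p" "i < p"
  shows "(\<Sum>m<p. (-1)^m * ((1 + fls_X)^i * phi_fls p d) $$ (int p * n + int m))
         = (if i = 0 then d $$ n else 0)"
proof -
  have "(\<Sum>m<p. (-1)^m * ((1 + fls_X)^i * phi_fls p d) $$ (int p * n + int m))
      = (\<Sum>m<p. (-1)^m * of_nat (i choose m)) * d $$ n"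
    by (simp add: Yphi_nth[OF assms(1,2,3)] sum_distrib_right mult.assoc)
  also have "(\<Sum>m<p. (-1)^m * of_nat (i choose m) :: 'k) = (\<Sum>m\<le>i. (-1)^m * of_nat (i choose m))"
    by (rule sum.mono_neutral_right) (use assms in \<open>auto simp: binomial_eq_0 not_le\<close>)
  also have "\<dots> = (if i = 0 then 1 else 0)"
    using choose_alternating_sum[of i, where 'a='k] by auto
  finally show ?thesis by simp
qed



definition sect :: "nat \<Rightarrow> nat \<Rightarrow> 'k::field fls \<Rightarrow> 'k fls" where
  "sect p m F = Abs_fls (\<lambda>n. F $$ (int p * n + int m))"

lemma sect_nth:
  assumes "p > 0"
  shows "sect p m F $$ n = F $$ (int p * n + int m)"
proof -
  define s where "s = fls_subdegree F"
  have "\<forall>n < - \<bar>s\<bar> - int m - 1. F $$ (int p * n + int m) = 0"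
  proof (intro allI impI)
    fix n assume n: "n < - \<bar>s\<bar> - int m - 1"
    have "int p * n \<le> 1 * n" using assms n by (intro mult_right_mono_neg) auto
    hence "int p * n + int m < s" using n by linarith
    thus "F $$ (int p * n + int m) = 0" by (simp add: s_def fls_eq0_below_subdegree)
  qed
  thus ?thesis unfolding sect_def by (intro nth_Abs_fls_lower_bound) 
qed

lemma phi_sum:
  fixes E :: "nat \<Rightarrow> 'k::field fls"
  assumes "prime p" "CHAR('k) = p"
  shows "phi_fls p (\<Sum>m\<in>A. fls_const (c m) * E m) = (\<Sum>m\<in>A. fls_const (c m) * phi_fls p (E m))"
  by (rule fls_eqI) (simp add: phi_nth[OF assms] fls_nth_sum)

lemma X_decomp:
  fixes F :: "'k::field fls"
  assumes "prime p" "CHAR('k) = p"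
  shows "F = (\<Sum>m<p. fls_X^m * phi_fls p (sect p m F))"
proof (rule fls_eqI)
  fix k
  have p0: "p > 0" using assms prime_gt_0_nat by blast
  define m0 where "m0 = nat (k mod int p)"
  have m0p: "m0 < p" using p0 unfolding m0_def by (simp add: nat_less_iff)
  have km0: "int m0 = k mod int p" using p0 unfolding m0_def by simp
  have "(\<Sum>m<p. fls_X^m * phi_fls p (sect p m F)) $$ k
      = (\<Sum>m<p. if m = m0 then F $$ k else 0)"
  proof (intro trans[OF fls_nth_sum] sum.cong refl)
    fix m assume m: "m \<in> {..<p}"
    show "(fls_X^m * phi_fls p (sect p m F)) $$ k = (if m = m0 then F $$ k else 0)"
    proof (cases "m = m0")
      case True
      have "k mod int p = int m mod int p" using km0 True m by simp
      hence d: "int p dvd (k - int m)" by (simp add: mod_eq_dvd_iff)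
      have "int p * ((k - int m) div int p) + int m = k" using d by simp
      thus ?thesis using True d p0
        by (simp add: fls_X_power_times_conv_shift phi_nth[OF assms] sect_nth)
    next
      case False
      have "\<not> int p dvd (k - int m)"
      proof
        assume "int p dvd (k - int m)"
        hence "k mod int p = int m mod int p" by (simp add: mod_eq_dvd_iff)
        also have "\<dots> = int m" using m by simp
        finally show False using km0 False by simp
      qed
      thus ?thesis using False by (simp add: fls_X_power_times_conv_shift phi_nth[OF assms])
    qed
  qed
  also have "\<dots> = F $$ k" using m0p by simp
  finally show "F $$ k = (\<Sum>m<p. fls_X^m * phi_fls p (sect p m F)) $$ k" by simp
qed




definition dcoef :: "nat \<Rightarrow> nat \<Rightarrow> 'k::field fls \<Rightarrow> 'k fls" where
  "dcoef p l F = (\<Sum>m<p. fls_const (of_nat (m choose l) * (-1)^(m-l)) * sect p m F)"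

lemma Xpow_Y:
  assumes "m < p"
  shows "(fls_X::'k::field fls)^m = (\<Sum>l<p. fls_const (of_nat (m choose l) * (-1)^(m-l)) * (1 + fls_X)^l)"
proof -
  have "(fls_X::'k fls)^m = ((1 + fls_X) + (-1))^m" by simp
  also have "\<dots> = (\<Sum>l\<le>m. of_nat (m choose l) * (1 + fls_X)^l * (-1)^(m-l))"
    by (rule binomial_ring)
  also have "\<dots> = (\<Sum>l\<le>m. fls_const (of_nat (m choose l) * (-1)^(m-l)) * (1 + fls_X)^l)"
  proof (intro sum.cong refl)
    fix l
    have "fls_const (of_nat (m choose l) * (-1)^(m-l) :: 'k) = fls_const (of_nat (m choose l)) * fls_const ((-1)^(m-l))"
      by simp
    also have "\<dots> = of_nat (m choose l) * (-1)^(m-l)" by (simp add: fls_of_nat fls_const_power)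
    finally show "of_nat (m choose l) * (1 + fls_X)^l * (-1)^(m-l) = fls_const (of_nat (m choose l) * (-1)^(m-l) :: 'k) * (1 + fls_X)^l"
      by (simp only: mult_ac)
  qed
  also have "\<dots> = (\<Sum>l<p. fls_const (of_nat (m choose l) * (-1)^(m-l)) * (1 + fls_X)^l)"
    by (rule sum.mono_neutral_left) (use assms in \<open>auto simp: binomial_eq_0 not_le\<close>)
  finally show ?thesis .
qed

lemma Y_decomp:
  fixes F :: "'k::field fls"
  assumes "prime p" "CHAR('k) = p"
  shows "F = (\<Sum>l<p. (1 + fls_X)^l * phi_fls p (dcoef p l F))"
proof -
  let ?c = "\<lambda>m l. fls_const (of_nat (m choose l) * (-1)^(m-l) :: 'k)"
  have "F = (\<Sum>m<p. fls_X^m * phi_fls p (sect p m F))" by (rule X_decomp[OF assms])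
  also have "\<dots> = (\<Sum>m<p. (\<Sum>l<p. ?c m l * (1 + fls_X)^l) * phi_fls p (sect p m F))"
    by (intro sum.cong refl) (simp add: Xpow_Y)
  also have "\<dots> = (\<Sum>m<p. \<Sum>l<p. (1 + fls_X)^l * (?c m l * phi_fls p (sect p m F)))"
    by (simp add: sum_distrib_right sum_distrib_left mult_ac)
  also have "\<dots> = (\<Sum>l<p. \<Sum>m<p. (1 + fls_X)^l * (?c m l * phi_fls p (sect p m F)))"
    by (rule sum.swap)
  also have "\<dots> = (\<Sum>l<p. (1 + fls_X)^l * phi_fls p (dcoef p l F))"
    by (simp add: dcoef_def phi_sum[OF assms] sum_distrib_left)
  finally show ?thesis .
qed

lemma psi_unique:
  fixes F :: "'k::field fls"
  assumes "prime p" "CHAR('k) = p" "F = (\<Sum>i<p. (1 + fls_X)^i * phi_fls p (a i))"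
  shows "a 0 $$ n = (\<Sum>m<p. (-1)^m * F $$ (int p * n + int m))"
proof -
  have "(\<Sum>m<p. (-1)^m * F $$ (int p * n + int m))
     = (\<Sum>m<p. \<Sum>i<p. (-1)^m * ((1 + fls_X)^i * phi_fls p (a i)) $$ (int p * n + int m))"
    by (simp add: assms(3) fls_nth_sum sum_distrib_left)
  also have "\<dots> = (\<Sum>i<p. \<Sum>m<p. (-1)^m * ((1 + fls_X)^i * phi_fls p (a i)) $$ (int p * n + int m))"
    by (rule sum.swap)
  also have "\<dots> = (\<Sum>i<p. if i = 0 then a i $$ n else 0)"
    by (intro sum.cong refl) (simp add: psiT_Yphi[OF assms(1,2)])
  also have "\<dots> = a 0 $$ n" using assms prime_gt_0_nat by simp
  finally show ?thesis by simp
qed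

lemma psi_nth:
  fixes F :: "'k::field fls"
  assumes "prime p" "CHAR('k) = p"
  shows "psi_fls p F $$ n = (\<Sum>m<p. (-1)^m * F $$ (int p * n + int m))"
proof -
  define a where "a = (\<lambda>l. dcoef p l F)"
  have ex: "F = (\<Sum>i<p. (1 + fls_X)^i * phi_fls p (a i))" unfolding a_def by (rule Y_decomp[OF assms])
  have "psi_fls p F = a 0"
    unfolding psi_fls_def
  proof (rule the_equality)
    show "\<exists>b. F = (\<Sum>i<p. (1 + fls_X) ^ i * phi_fls p (b i)) \<and> a 0 = b 0" using ex by blast
  next
    fix c assume "\<exists>b. F = (\<Sum>i<p. (1 + fls_X) ^ i * phi_fls p (b i)) \<and> c = b 0"
    then obtain b where b: "F = (\<Sum>i<p. (1 + fls_X) ^ i * phi_fls p (b i))" "c = b 0" by blast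
    show "c = a 0"
    proof (rule fls_eqI)
      fix n show "c $$ n = a 0 $$ n"
        using psi_unique[OF assms b(1)] psi_unique[OF assms ex] b(2) by simp
    qed
  qed
  thus ?thesis using psi_unique[OF assms ex] by simp
qed




lemma phi_Y:
  assumes "prime p" "CHAR('k::field) = p"
  shows "phi_fls p (1 + fls_X :: 'k fls) = (1 + fls_X)^p"
proof -
  have p0: "p > 0" using assms prime_gt_0_nat by blast
  have "phi_fls p (1 + fls_X :: 'k fls) = fls_compose_fps 1 (fps_X^p) + fls_compose_fps fls_X (fps_X^p)"
  proof -
    have "(fps_X::'k fps)^p \<noteq> 0" by simp
    moreover have "((fps_X::'k fps)^p) $ 0 = 0" using p0 by simp
    ultimately show ?thesis by (simp add: phi_fls_def phi_X[OF assms] fls_compose_fps_add)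
  qed
  also have "\<dots> = 1 + fls_X^p" by (simp add: fps_to_fls_power)
  also have "\<dots> = (fls_X + 1 :: 'k fls)^p"
  proof -
    have "prime CHAR('k fls)" using assms by simp
    hence "(fls_X + 1 :: 'k fls)^p = fls_X^p + 1^p"
      by (rule freshmans_dream) (simp add: assms)
    thus ?thesis by (simp add: add.commute)
  qed
  finally show ?thesis by (simp add: add.commute)
qed

lemma phi_mult:
  assumes "prime p" "CHAR('k::field) = p"
  shows "phi_fls p (F * G :: 'k fls) = phi_fls p F * phi_fls p G"
proof -
  have p0: "p > 0" using assms prime_gt_0_nat by blast
  have "(fps_X::'k fps)^p \<noteq> 0" by simp
  moreover have "((fps_X::'k fps)^p) $ 0 = 0" using p0 by simp
  ultimately show ?thesis by (simp add: phi_fls_def phi_X[OF assms] fls_compose_fps_mult)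
qed

lemma psiT_Yphi2:
  fixes d :: "'k::field fls"
  assumes "prime p" "CHAR('k) = p" "k < 2 * p"
  shows "(\<Sum>m<p. (-1)^m * ((1 + fls_X)^k * phi_fls p d) $$ (int p * n + int m))
         = (if k = 0 then d $$ n else if k = p then d $$ n + d $$ (n - 1) else 0)"
proof (cases "k < p")
  case True
  thus ?thesis using psiT_Yphi[OF assms(1,2) True] by auto
next
  case False
  have p0: "p > 0" using assms prime_gt_0_nat by blast
  have "(1 + fls_X)^k * phi_fls p d = (1 + fls_X)^(k-p) * ((1 + fls_X)^p * phi_fls p d)"
    using False by (simp add: power_add[symmetric] mult.assoc[symmetric])
  also have "\<dots> = (1 + fls_X)^(k-p) * phi_fls p ((1 + fls_X) * d)"
    by (simp add: phi_mult[OF assms(1,2)] phi_Y[OF assms(1,2)])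
  finally have eq: "(1 + fls_X)^k * phi_fls p d = (1 + fls_X)^(k-p) * phi_fls p ((1 + fls_X) * d)" .
  have kp: "k - p < p" using assms False by simp
  have "((1 + fls_X) * d) $$ n = d $$ n + d $$ (n - 1)"
    by (simp add: distrib_right fls_X_power_times_conv_shift(1)[of 1, simplified])
  thus ?thesis unfolding eq using psiT_Yphi[OF assms(1,2) kp, of "(1 + fls_X) * d" n] False p0
    by auto
qed

lemma dcoef_nth:
  assumes "p > 0"
  shows "dcoef p l F $$ n = (\<Sum>m<p. of_nat (m choose l) * (-1)^(m-l) * F $$ (int p * n + int m))"
  by (simp add: dcoef_def fls_nth_sum sect_nth[OF assms])

lemma Tc:
  fixes h :: "'k::field fps"
  assumes "prime p" "CHAR('k) = p" "i < p"
  shows "(\<Sum>m<p. (-1)^m * ((1 + fls_X)^((p - i) mod p) * fps_to_fls h) $$ int m)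
       = (\<Sum>b<p. of_nat (b choose i) * (-1)^(b-i) * h $ b)"
proof -
  have p0: "p > 0" using assms prime_gt_0_nat by blast
  define u where "u = (p - i) mod p"
  have up: "u < p" using p0 by (simp add: u_def)
  define a where "a = (\<lambda>l. dcoef p l (fps_to_fls h))"
  have H: "fps_to_fls h = (\<Sum>l<p. (1 + fls_X)^l * phi_fls p (a l))"
    unfolding a_def by (rule Y_decomp[OF assms(1,2)])
  have "(\<Sum>m<p. (-1)^m * ((1 + fls_X)^u * fps_to_fls h) $$ int m)
      = (\<Sum>m<p. \<Sum>l<p. (-1)^m * ((1 + fls_X)^(u + l) * phi_fls p (a l)) $$ (int p * 0 + int m))"
    by (subst H) (simp add: sum_distrib_left fls_nth_sum power_add mult.assoc)
  also have "\<dots> = (\<Sum>l<p. \<Sum>m<p. (-1)^m * ((1 + fls_X)^(u + l) * phi_fls p (a l)) $$ (int p * 0 + int m))"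
    by (rule sum.swap)
  also have "\<dots> = (\<Sum>l<p. if l = i then a l $$ 0 else 0)"
  proof (intro sum.cong refl)
    fix l assume l: "l \<in> {..<p}"
    have "u + l < 2 * p" using up l by simp
    note e = psiT_Yphi2[OF assms(1,2) this, of "a l" 0]
    have am1: "a l $$ (0 - 1) = 0"
      using p0 by (simp add: a_def dcoef_nth) 
    show "(\<Sum>m<p. (-1)^m * ((1 + fls_X)^(u + l) * phi_fls p (a l)) $$ (int p * 0 + int m))
          = (if l = i then a l $$ 0 else 0)"
    proof (cases "i = 0")
      case True
      hence "u = 0" by (simp add: u_def)
      thus ?thesis using e True l by auto
    next
      case False
      hence "u = p - i" using assms by (simp add: u_def)
      show ?thesis
      proof (cases "l = i")
        case True
        hence "u + l = p" "u + l \<noteq> 0" using \<open>u = p - i\<close> assms p0 by auto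
        thus ?thesis using e am1 True by simp
      next
        case nl: False
        hence "u + l \<noteq> p" "u + l \<noteq> 0" using \<open>u = p - i\<close> assms False l by auto
        moreover have "u > 0" using \<open>u = p - i\<close> assms by simp
        ultimately show ?thesis using e nl by simp
      qed
    qed
  qed
  also have "\<dots> = a i $$ 0" using assms by simp
  also have "\<dots> = (\<Sum>b<p. of_nat (b choose i) * (-1)^(b-i) * h $ b)"
    using p0 by (simp add: a_def dcoef_nth)
  finally show ?thesis by (simp add: u_def)
qed




lemma Ypow_nth: "((1 + fps_X)^n :: 'k::field fps) $ a = of_nat (n choose a)"
proof -
  have "((fps_X + 1)^n :: 'k fps) = (\<Sum>k\<le>n. of_nat (n choose k) * fps_X^k * 1^(n-k))"
    by (rule binomial_ring)
  hence "((1 + fps_X)^n :: 'k fps) $ a = (\<Sum>k\<le>n. of_nat (n choose k) * (fps_X^k) $ a)"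
    by (simp add: add.commute fps_sum_nth fps_of_nat)
  also have "\<dots> = (\<Sum>k\<le>n. if k = a then of_nat (n choose a) else 0)"
    by (intro sum.cong refl) auto
  also have "\<dots> = of_nat (n choose a)" by (auto simp: binomial_eq_0)
  finally show ?thesis .
qed

lemma onepXp_nth:
  assumes "k < p"
  shows "((1 + fps_X^p)^q :: 'k::field fps) $ k = (if k = 0 then 1 else 0)"
proof (induction q)
  case 0 thus ?case by simp
next
  case (Suc q)
  have "((1 + fps_X^p)^Suc q :: 'k fps) $ k = ((1 + fps_X^p)^q) $ k + (fps_X^p * (1 + fps_X^p)^q) $ k"
    by (simp only: power_Suc distrib_right mult_1_left fps_add_nth)
  also have "(fps_X^p * (1 + fps_X^p)^q :: 'k fps) $ k = 0"
    using assms by (simp only: fps_X_power_mult_nth if_True)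
  finally show ?case using Suc by simp
qed

lemma lucas_lite:
  assumes "prime p" "CHAR('k::field) = p" "a < p"
  shows "((1 + fps_X)^t :: 'k fps) $ a = ((1 + fps_X)^(t mod p)) $ a"
proof -
  have "((1 + fps_X)^p :: 'k fps) = 1 + fps_X^p"
    using phi_X[OF assms(1,2)] by (simp add: algebra_simps)
  have tt: "t = t mod p + p * (t div p)" by simp
  have "((1 + fps_X)^t :: 'k fps) = (1 + fps_X)^(t mod p + p * (t div p))"
    by (subst tt) (rule refl)
  also have "\<dots> = (1 + fps_X)^(t mod p) * ((1 + fps_X)^p)^(t div p)"
    by (simp only: power_add power_mult)
  finally have eq: "((1 + fps_X)^t :: 'k fps) = (1 + fps_X)^(t mod p) * (1 + fps_X^p)^(t div p)"
    using \<open>((1 + fps_X)^p :: 'k fps) = 1 + fps_X^p\<close> by simp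
  have "((1 + fps_X)^(t mod p) * (1 + fps_X^p)^(t div p) :: 'k fps) $ a
      = (\<Sum>j=0..a. ((1 + fps_X)^(t mod p)) $ j * ((1 + fps_X^p)^(t div p)) $ (a - j))"
    by (rule fps_mult_nth)
  also have "\<dots> = (\<Sum>j=0..a. if j = a then ((1 + fps_X)^(t mod p)) $ a else 0)"
    by (intro sum.cong refl) (use assms in \<open>auto simp: onepXp_nth\<close>)
  also have "\<dots> = ((1 + fps_X)^(t mod p)) $ a" by simp
  finally have calc: "((1 + fps_X)^(t mod p) * (1 + fps_X^p)^(t div p) :: 'k fps) $ a = ((1 + fps_X)^(t mod p)) $ a" .
  show ?thesis by (subst eq) (rule calc)
qed

lemma binom_pow_nth_lt:
  fixes z :: "nat \<Rightarrow> int"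
  assumes "prime p" "CHAR('k::field) = p" "a < p" "i < p"
    and "\<forall>n\<ge>1. z n mod int p = (- int i) mod int p" and "\<forall>n. z n \<ge> 0"
  shows "(binom_pow z :: 'k fps) $ a = ((1 + fps_X)^((p - i) mod p)) $ a"
proof -
  have p0: "p > 0" using assms prime_gt_0_nat by blast
  have "(binom_pow z :: 'k fps) $ a = of_nat (nat (z (Suc a)) choose a)"
    by (simp add: binom_pow_def)
  also have "\<dots> = ((1 + fps_X)^(nat (z (Suc a)))) $ a" by (simp add: Ypow_nth)
  also have "\<dots> = ((1 + fps_X)^(nat (z (Suc a)) mod p)) $ a" by (rule lucas_lite[OF assms(1-3)])
  also have "nat (z (Suc a)) mod p = (p - i) mod p"
  proof -
    have "int (nat (z (Suc a)) mod p) = z (Suc a) mod int p"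
      using assms(6) by (simp add: zmod_int)
    also have "\<dots> = (- int i) mod int p" using assms(5) by simp
    also have "\<dots> = int ((p - i) mod p)"
    proof -
      have "(- int i) mod int p = (int p - int i) mod int p" by (simp add: mod_diff_left_eq[symmetric])
      also have "int p - int i = int (p - i)" using assms by simp
      finally show ?thesis by (simp add: zmod_int)
    qed
    finally show ?thesis by simp
  qed
  finally show ?thesis .
qed

lemma padic_mod_p:
  assumes "z \<in> padic_int p" "n \<ge> 1"
  shows "z n mod int p = z 1"
  using assms(2)
proof (induction n rule: dec_induct)
  case base
  have "0 \<le> z 1 \<and> z 1 < int p ^ 1" using assms(1) unfolding padic_int_def by blast
  thus ?case by simp
next
  case (step n)
  have "z (Suc n) mod int p = (z (Suc n) mod int p ^ n) mod int p"
    using step by (simp add: mod_mod_cancel)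
  also have "z (Suc n) mod int p ^ n = z n" using assms(1) by (simp add: padic_int_def)
  finally show ?case using step by simp
qed



definition AF :: "nat \<Rightarrow> nat \<Rightarrow> 'a::comm_ring_1" where
  "AF b m = (\<Sum>j\<le>b. (-1)^j * of_nat (b choose j) * of_nat j ^ m)"

lemma AF_shift: "AF b m = (0::'a::comm_ring_1)^m + (\<Sum>j\<le>b. (-1)^(Suc j) * of_nat (b choose Suc j) * of_nat (Suc j) ^ m)"
proof -
  have "AF b m = (\<Sum>j\<le>Suc b. (-1)^j * of_nat (b choose j) * (of_nat j ::'a) ^ m)"
    unfolding AF_def by (simp add: binomial_eq_0)
  also have "\<dots> = (0::'a)^m + (\<Sum>j\<le>b. (-1)^(Suc j) * of_nat (b choose Suc j) * of_nat (Suc j) ^ m)"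
    by (subst sum.atMost_Suc_shift) simp
  finally show ?thesis .
qed

lemma AF_Suc: "AF (Suc b) m = - (\<Sum>t<m. of_nat (m choose t) * (AF b t :: 'a::comm_ring_1))"
proof -
  have "AF (Suc b) m = (0::'a)^m + (\<Sum>j\<le>b. (-1)^(Suc j) * of_nat (Suc b choose Suc j) * of_nat (Suc j) ^ m)"
    unfolding AF_def by (subst sum.atMost_Suc_shift) simp
  also have "(\<Sum>j\<le>b. (-1)^(Suc j) * of_nat (Suc b choose Suc j) * (of_nat (Suc j)::'a) ^ m)
     = (\<Sum>j\<le>b. (-1)^(Suc j) * of_nat (b choose j) * of_nat (Suc j) ^ m)
       + (\<Sum>j\<le>b. (-1)^(Suc j) * of_nat (b choose Suc j) * of_nat (Suc j) ^ m)"
    by (simp add: sum.distrib[symmetric] algebra_simps)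
  also have "(\<Sum>j\<le>b. (-1)^(Suc j) * of_nat (b choose j) * (of_nat (Suc j)::'a) ^ m)
      = - (\<Sum>t\<le>m. of_nat (m choose t) * AF b t)"
  proof -
    have "(of_nat (Suc j)::'a) ^ m = (\<Sum>t\<le>m. of_nat (m choose t) * of_nat j ^ t)" for j
      using binomial_ring[of "of_nat j :: 'a" 1 m] by (simp add: add.commute)
    hence "(\<Sum>j\<le>b. (-1)^(Suc j) * of_nat (b choose j) * (of_nat (Suc j)::'a) ^ m)
        = - (\<Sum>j\<le>b. \<Sum>t\<le>m. of_nat (m choose t) * ((-1)^j * of_nat (b choose j) * of_nat j ^ t))"
      by (simp add: sum_distrib_left sum_negf mult_ac)
    also have "\<dots> = - (\<Sum>t\<le>m. \<Sum>j\<le>b. of_nat (m choose t) * ((-1)^j * of_nat (b choose j) * of_nat j ^ t))"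
      by (subst sum.swap) rule
    also have "\<dots> = - (\<Sum>t\<le>m. of_nat (m choose t) * AF b t)"
      by (simp add: AF_def sum_distrib_left)
    finally show ?thesis .
  qed
  finally have "AF (Suc b) m = AF b m - (\<Sum>t\<le>m. of_nat (m choose t) * (AF b t :: 'a))"
    by (simp add: AF_shift[of b m])
  also have "\<dots> = - (\<Sum>t<m. of_nat (m choose t) * (AF b t :: 'a))"
    by (simp add: lessThan_Suc_atMost[symmetric])
  finally show ?thesis .
qed

lemma AF_vals: "(\<forall>m<b. AF b m = (0::'a::comm_ring_1)) \<and> AF b b = ((-1)^b * of_nat (fact b) :: 'a)"
proof (induction b)
  case 0 thus ?case by (simp add: AF_def)
next
  case (Suc b)
  have z: "AF (Suc b) m = (0::'a)" if "m < Suc b" for m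
  proof -
    have "(\<Sum>t<m. of_nat (m choose t) * (AF b t :: 'a)) = 0"
      using Suc.IH that by (intro sum.neutral) auto
    thus ?thesis by (simp add: AF_Suc)
  qed
  have "(\<Sum>t<Suc b. of_nat (Suc b choose t) * (AF b t :: 'a)) = of_nat (Suc b choose b) * AF b b"
    using Suc.IH by (simp add: lessThan_Suc)
  hence "AF (Suc b) (Suc b) = - (of_nat (Suc b) * ((-1)^b * of_nat (fact b)) :: 'a)"
    using Suc.IH by (simp add: AF_Suc del: of_nat_Suc)
  also have "\<dots> = (-1)^(Suc b) * of_nat (fact (Suc b))"
    by (simp only: fact_Suc of_nat_mult power_Suc) (simp add: algebra_simps)
  finally show ?case using z by blast
qed



lemma ofnat_u:
  assumes "CHAR('k::field) = p" "i < p"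
  shows "(of_nat ((p - i) mod p) :: 'k) = - of_nat i"
proof (cases "i = 0")
  case True thus ?thesis by simp
next
  case False
  hence "(p - i) mod p = p - i" using assms by simp
  moreover have "(of_nat (p - i) :: 'k) = of_nat p - of_nat i" using assms by (simp add: of_nat_diff)
  moreover have "(of_nat p :: 'k) = 0" using assms(1) by (metis of_nat_CHAR)
  ultimately show ?thesis by simp
qed

lemma fact_nonzero_char:
  assumes "prime p" "CHAR('k::field) = p" "e < p"
  shows "(of_nat (fact e) :: 'k) \<noteq> 0"
proof
  assume "(of_nat (fact e) :: 'k) = 0"
  hence "p dvd fact e" using assms(2) by (simp add: of_nat_eq_0_iff_char_dvd)
  thus False using assms prime_dvd_fact_iff[OF assms(1)] by simp
qed

lemma binom_Suc_mult: "(n choose Suc k) * Suc k = (n choose k) * (n - k)"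
  using binomial_absorption[of k n] binomial_absorb_comp[of n k] by (simp add: mult_ac)

lemma binom_poly:
  assumes "prime p" "CHAR('k::field) = p" "e < p"
  shows "\<exists>q :: 'k poly. degree q \<le> e \<and> coeff q e = (-1)^e / of_nat (fact e)
            \<and> (\<forall>i<p. of_nat ((p - i) mod p choose e) = poly q (of_nat i))"
  using assms(3)
proof (induction e)
  case 0 thus ?case by (intro exI[of _ "[:1:]"]) simp
next
  case (Suc e)
  then obtain q :: "'k poly" where q: "degree q \<le> e" "coeff q e = (-1)^e / of_nat (fact e)"
      "\<forall>i<p. of_nat ((p - i) mod p choose e) = poly q (of_nat i)" by auto
  define c :: 'k where "c = inverse (of_nat (Suc e))"
  have sne: "(of_nat (Suc e) :: 'k) \<noteq> 0"
  proof
    assume "(of_nat (Suc e) :: 'k) = 0"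
    hence "CHAR('k) dvd Suc e" by (simp only: of_nat_eq_0_iff_char_dvd)
    hence "p dvd Suc e" using assms(2) by simp
    thus False using Suc.prems by (simp add: nat_dvd_not_less)
  qed
  define q' where "q' = smult c (q * [:- of_nat e, -1:])"
  have "degree q' \<le> Suc e"
  proof -
    have "degree (q * [:- of_nat e, -1:]) \<le> degree q + degree [:- of_nat e, -1::'k:]"
      by (rule degree_mult_le)
    also have "\<dots> \<le> e + 1" using q(1) by simp
    finally have "degree (q * [:- of_nat e, -1:]) \<le> Suc e" by simp
    thus ?thesis unfolding q'_def using degree_smult_le[of c "q * [:- of_nat e, -1:]"] by linarith
  qed
  moreover have "coeff q' (Suc e) = (-1)^Suc e / of_nat (fact (Suc e))"
  proof -
    have "coeff q (Suc e) = 0" using q(1) by (simp add: coeff_eq_0)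
    hence A: "coeff (q * [:- of_nat e, -1:]) (Suc e) = - coeff q e"
      by (simp add: mult_pCons_right coeff_pCons)
    have "coeff q' (Suc e) = c * coeff (q * [:- of_nat e, -1:]) (Suc e)"
      unfolding q'_def by (rule coeff_smult)
    hence "coeff q' (Suc e) = c * (- ((-1)^e / of_nat (fact e)))" by (simp only: A q(2))
    also have "\<dots> = (-1)^Suc e / of_nat (fact (Suc e))"
      by (simp add: c_def fact_Suc of_nat_mult field_simps del: of_nat_Suc) (simp add: algebra_simps)
    finally show ?thesis .
  qed
  moreover have "\<forall>i<p. of_nat ((p - i) mod p choose Suc e) = poly q' (of_nat i)"
  proof (intro allI impI)
    fix i assume i: "i < p"
    define u where "u = (p - i) mod p"
    have "(of_nat (u choose Suc e) :: 'k) * of_nat (Suc e) = of_nat (u choose e) * of_nat (u - e)"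
      by (simp only: of_nat_mult[symmetric] binom_Suc_mult)
    also have "(of_nat (u choose e) :: 'k) * of_nat (u - e) = of_nat (u choose e) * (of_nat u - of_nat e)"
      by (cases "e \<le> u") (simp_all add: of_nat_diff binomial_eq_0)
    also have "(of_nat u :: 'k) = - of_nat i" unfolding u_def by (rule ofnat_u[OF assms(2) i])
    finally have "(of_nat (u choose Suc e) :: 'k) = c * (of_nat (u choose e) * (- of_nat i - of_nat e))"
      using sne by (simp add: c_def field_simps)
    also have "\<dots> = poly q' (of_nat i)"
      using q(3) i by (simp add: q'_def u_def algebra_simps)
    finally show "of_nat ((p - i) mod p choose Suc e) = poly q' (of_nat i)" by (simp add: u_def)
  qed
  ultimately show ?case by blast
qed

lemma poly_sum_le:
  fixes q :: "'k::field poly"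
  assumes "degree q \<le> e"
  shows "poly q x = (\<Sum>l\<le>e. coeff q l * x^l)"
proof -
  have "poly q x = (\<Sum>l\<le>degree q. coeff q l * x^l)" by (rule poly_altdef)
  also have "\<dots> = (\<Sum>l\<le>e. coeff q l * x^l)"
    by (rule sum.mono_neutral_left) (use assms in \<open>auto simp: coeff_eq_0\<close>)
  finally show ?thesis .
qed

lemma orth_binom:
  fixes ls :: "nat \<Rightarrow> 'k::field"
  assumes "prime p" "CHAR('k) = p" "e \<le> r" "r < p"
    and orth: "\<forall>l<r. (\<Sum>i<p. of_nat i ^ l * ls i) = 0"
  shows "(\<Sum>i<p. ls i * of_nat ((p - i) mod p choose e))
        = (if e = r then (-1)^r / of_nat (fact r) * (\<Sum>i<p. ls i * of_nat i ^ r) else 0)"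
proof -
  obtain q :: "'k poly" where q: "degree q \<le> e" "coeff q e = (-1)^e / of_nat (fact e)"
      "\<forall>i<p. of_nat ((p - i) mod p choose e) = poly q (of_nat i)"
    using binom_poly[OF assms(1,2)] assms(3,4) by (meson le_less_trans)
  have "(\<Sum>i<p. ls i * of_nat ((p - i) mod p choose e)) = (\<Sum>i<p. ls i * (\<Sum>l\<le>e. coeff q l * of_nat i ^ l))"
    using q(3) by (intro sum.cong refl) (simp add: poly_sum_le[OF q(1)])
  also have "\<dots> = (\<Sum>l\<le>e. coeff q l * (\<Sum>i<p. of_nat i ^ l * ls i))"
    by (simp add: sum_distrib_left sum_distrib_right mult_ac sum.swap[of _ "{..<p}"])
  also have "\<dots> = (\<Sum>l\<le>e. if l = r then coeff q r * (\<Sum>i<p. ls i * of_nat i ^ r) else 0)"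
    using orth assms(3) by (intro sum.cong refl) (auto simp: mult_ac)
  also have "\<dots> = (if e = r then (-1)^r / of_nat (fact r) * (\<Sum>i<p. ls i * of_nat i ^ r) else 0)"
    using assms(3) q(2) by auto
  finally show ?thesis .
qed




lemma minus_one_pow_pm1:
  assumes "prime p" "CHAR('k::field) = p"
  shows "(-1::'k)^(p-1) = 1"
proof (cases "p = 2")
  case True
  have "CHAR('k) = 2" using assms(2) True by simp
  hence m1: "(-1::'k) = 1" by (rule uminus_CHAR_2)
  have "(-1::'k)^(p-1) = 1^(p-1)" by (simp only: m1)
  thus ?thesis by (simp only: power_one)
next
  case False
  have "p \<ge> 2" using assms(1) by (rule prime_ge_2_nat)
  hence "p > 2" using False by simp
  hence "odd p" using assms(1) prime_odd_nat by simp
  then obtain k where k: "p = 2 * k + 1" by (rule oddE)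
  have "(-1::'k)^(p-1) = ((-1)^2)^k" using k by (simp add: power_mult)
  also have "\<dots> = 1" by simp
  finally show ?thesis .
qed

lemma regpart_eq:
  assumes "\<forall>n<0. F $$ n = 0"
  shows "fps_to_fls (fls_regpart F) = F"
  by (rule fls_eqI) (use assms in simp)

lemma psiD_eq:
  fixes lam :: "'k::field"
  assumes "lam \<noteq> 0"
  shows "psi_D p r lam (A, B) = (psi_fls p (fls_const (inverse lam) * B),
           psi_fls p (fls_const (- inverse lam) * fls_X^((r+1)*(p-1)) * A))"
proof -
  define N where "N = (r+1)*(p-1)"
  define K :: "'k fls" where "K = - fls_const lam * fls_X powi (- int N)"
  define Ki :: "'k fls" where "Ki = fls_const (- inverse lam) * fls_X^N"
  have KK: "K * Ki = 1"
  proof -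
    have "K * Ki = fls_const (lam * inverse lam) * (fls_X powi (- int N) * fls_X^N)"
      by (simp add: K_def Ki_def mult_ac fls_const_mult_const[symmetric] del: fls_const_mult_const fls_X_power_int)
    also have "fls_X powi (- int N) * fls_X^N = (1::'k fls)"
      by (simp add: power_int_minus del: fls_X_power_int)
    finally show ?thesis using assms by simp
  qed
  have phe: "phi_e lam = (0, fls_const lam)" by (simp add: phi_e_def dsc_def f_D_def)
  have phf: "phi_f p r lam = (K, 0)" by (simp add: phi_f_def dsc_def e_D_def K_def N_def)
  have dec: "\<And>c1 c2. dsc c1 (phi_e lam) + dsc c2 (phi_f p r lam) = (c2 * K, c1 * fls_const lam)"
    by (simp add: phe phf dsc_def)
  have res: "\<And>c1 c2. dsc (psi_fls p c1) e_D + dsc (psi_fls p c2) f_D = (psi_fls p c1, psi_fls p c2)"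
    by (simp add: dsc_def e_D_def f_D_def)
  show ?thesis
    unfolding psi_D_def
  proof (rule the_equality)
    show "\<exists>c1 c2. (A, B) = dsc c1 (phi_e lam) + dsc c2 (phi_f p r lam) \<and>
      (psi_fls p (fls_const (inverse lam) * B), psi_fls p (fls_const (- inverse lam) * fls_X ^ ((r + 1) * (p - 1)) * A))
        = dsc (psi_fls p c1) e_D + dsc (psi_fls p c2) f_D"
    proof (intro exI conjI)
      show "(A, B) = dsc (fls_const (inverse lam) * B) (phi_e lam) + dsc (Ki * A) (phi_f p r lam)"
      proof -
        have "Ki * A * K = A" using KK by (simp add: mult_ac)
        moreover have "fls_const (inverse lam) * B * fls_const lam = B"
          using assms by (simp add: mult_ac)
        ultimately show ?thesis by (simp add: dec)
      qed
      show "(psi_fls p (fls_const (inverse lam) * B), psi_fls p (fls_const (- inverse lam) * fls_X ^ ((r + 1) * (p - 1)) * A))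
        = dsc (psi_fls p (fls_const (inverse lam) * B)) e_D + dsc (psi_fls p (Ki * A)) f_D"
        by (simp add: res Ki_def N_def)
    qed
  next
    fix y assume "\<exists>c1 c2. (A, B) = dsc c1 (phi_e lam) + dsc c2 (phi_f p r lam) \<and>
                 y = dsc (psi_fls p c1) e_D + dsc (psi_fls p c2) f_D"
    then obtain c1 c2 where c: "(A, B) = (c2 * K, c1 * fls_const lam)"
        "y = (psi_fls p c1, psi_fls p c2)" by (auto simp: dec res)
    have "c2 = Ki * A"
    proof -
      have "Ki * A = c2 * (K * Ki)" using c(1) by (simp add: mult_ac)
      thus ?thesis using KK by simp
    qed
    moreover have "c1 = fls_const (inverse lam) * B"
    proof -
      have "fls_const (inverse lam) * B = c1 * fls_const (lam * inverse lam)"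
        using c(1) by (simp add: mult_ac)
      thus ?thesis using assms by simp
    qed
    ultimately show "y = (psi_fls p (fls_const (inverse lam) * B),
        psi_fls p (fls_const (- inverse lam) * fls_X ^ ((r + 1) * (p - 1)) * A))"
      using c(2) by (simp add: Ki_def N_def)
  qed
qed




lemma zcond_neg:
  assumes "prime p" "j \<in> padic_int p" "j 1 = int i"
  shows "\<forall>n\<ge>1. padic_mult_ppow p 0 (padic_neg p j) n mod int p = (- int i) mod int p"
    and "\<forall>n. padic_mult_ppow p 0 (padic_neg p j) n \<ge> 0"
proof -
  have p0: "p > 0" using assms prime_gt_0_nat by blast
  have z: "padic_mult_ppow p 0 (padic_neg p j) n = (- j n) mod int p ^ n" for n
    by (simp add: padic_mult_ppow_def padic_neg_def)
  show "\<forall>n. padic_mult_ppow p 0 (padic_neg p j) n \<ge> 0" using p0 by (simp add: z)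
  show "\<forall>n\<ge>1. padic_mult_ppow p 0 (padic_neg p j) n mod int p = (- int i) mod int p"
  proof (intro allI impI)
    fix n :: nat assume n: "n \<ge> 1"
    have d: "int p dvd int p ^ n" using n by (simp add: dvd_power)
    have "((- j n) mod int p ^ n) mod int p = (- j n) mod int p" using d by (simp add: mod_mod_cancel)
    also have "\<dots> = (- (j n mod int p)) mod int p" by (simp add: mod_minus_eq)
    also have "j n mod int p = j 1" by (rule padic_mod_p[OF assms(2) n])
    moreover have "j (Suc 0) = int i" using assms(3) by simp
    ultimately show "padic_mult_ppow p 0 (padic_neg p j) n mod int p = (- int i) mod int p"
      by (simp add: z)
  qed
qed

lemma zcond_int:
  assumes "prime p"
  shows "\<forall>n\<ge>1. padic_mult_ppow p 0 (padic_of_int p (- int i)) n mod int p = (- int i) mod int p"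
    and "\<forall>n. padic_mult_ppow p 0 (padic_of_int p (- int i)) n \<ge> 0"
proof -
  have p0: "p > 0" using assms prime_gt_0_nat by blast
  have z: "padic_mult_ppow p 0 (padic_of_int p (- int i)) n = (- int i) mod int p ^ n" for n
    by (simp add: padic_mult_ppow_def padic_of_int_def)
  show "\<forall>n. padic_mult_ppow p 0 (padic_of_int p (- int i)) n \<ge> 0" using p0 by (simp add: z)
  show "\<forall>n\<ge>1. padic_mult_ppow p 0 (padic_of_int p (- int i)) n mod int p = (- int i) mod int p"
  proof (intro allI impI)
    fix n :: nat assume n: "n \<ge> 1"
    have d: "int p dvd int p ^ n" using n by (simp add: dvd_power)
    show "padic_mult_ppow p 0 (padic_of_int p (- int i)) n mod int p = (- int i) mod int p"
      using d by (simp add: z mod_mod_cancel)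
  qed
qed

lemma Bmult_nth:
  assumes "prime p" "CHAR('k::field) = p" "m < p" "i < p"
    and "\<forall>n\<ge>1. z n mod int p = (- int i) mod int p" "\<forall>n. z n \<ge> 0"
  shows "((binom_pow z :: 'k fps) * h) $ m = ((1 + fps_X)^((p - i) mod p) * h) $ m"
  unfolding fps_mult_nth
  by (intro sum.cong refl) (use assms in \<open>simp add: binom_pow_nth_lt\<close>)

lemma center_val:
  assumes "prime p" "lam \<noteq> (0::'k::field)"
  shows "act_center r s lam (-1, padic_of_int p 1) V i = dsc (fls_const (lam^2)) (V i)"
proof -
  have p1: "int p > 1" using assms prime_gt_1_nat by auto
  have "snd ((-1::int), padic_of_int p 1) 1 = 1" using p1 by (simp add: padic_of_int_def)
  hence "omega_Qp ((-1::int), padic_of_int p 1) = (1::'k)" "chi_Qp s lam ((-1::int), padic_of_int p 1) = inverse lam"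
    by (simp_all add: omega_Qp_def chi_Qp_def power_int_minus)
  thus ?thesis using assms by (simp add: act_center_def power_inverse)
qed

lemma theta_gen:
  fixes lam :: "'k::field" and h :: "'k fps"
  assumes "prime p" "CHAR('k) = p" "lam \<noteq> 0" "i < p"
    and "\<forall>n\<ge>1. padic_mult_ppow p 0 zz n mod int p = (- int i) mod int p"
    and "\<forall>n. padic_mult_ppow p 0 zz n \<ge> 0"
    and "snd (y 0) = fps_to_fls h"
  shows "theta (act_center r s lam (-1, padic_of_int p 1) (act_diag_ppow p r lam 1 (act_unip p zz y)))
       = lam * (\<Sum>b<p. of_nat (b choose i) * (-1)^(b-i) * h $ b)"
proof -
  define B :: "'k fps" where "B = binom_pow (padic_mult_ppow p 0 zz)"
  define P :: "'k fps" where "P = (1 + fps_X)^((p - i) mod p)"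
  have W0: "act_unip p zz y 0 = (fps_to_fls B * fst (y 0), fps_to_fls B * fps_to_fls h)"
    using assms(7) by (simp add: act_unip_def dsc_def B_def)
  have D0: "act_diag_ppow p r lam 1 (act_unip p zz y) 0 = psi_D p r lam (act_unip p zz y 0)"
    by (simp add: act_diag_ppow_def)
  have "theta (act_center r s lam (-1, padic_of_int p 1) (act_diag_ppow p r lam 1 (act_unip p zz y)))
      = lam^2 * psi_fls p (fls_const (inverse lam) * (fps_to_fls B * fps_to_fls h)) $$ 0"
    by (simp add: theta_def center_val[OF assms(1,3)] D0 W0 psiD_eq[OF assms(3)] dsc_def)
  also have "\<dots> = lam^2 * (\<Sum>m<p. (-1)^m * (inverse lam * (B * h) $ m))"
    by (simp add: psi_nth[OF assms(1,2)] fls_times_fps_to_fls[symmetric])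
  also have "\<dots> = lam * (\<Sum>m<p. (-1)^m * (P * h) $ m)"
  proof -
    have "(\<Sum>m<p. (-1)^m * (inverse lam * (B * h) $ m)) = inverse lam * (\<Sum>m<p. (-1)^m * (P * h) $ m)"
      unfolding sum_distrib_left
      by (intro sum.cong refl) (use assms in \<open>simp add: B_def P_def Bmult_nth\<close>)
    thus ?thesis using assms(3) by (simp add: power2_eq_square)
  qed
  also have "(\<Sum>m<p. (-1)^m * (P * h) $ m) = (\<Sum>m<p. (-1)^m * ((1 + fls_X)^((p - i) mod p) * fps_to_fls h) $$ int m)"
  proof -
    have "fps_to_fls P = (1 + fls_X :: 'k fls)^((p - i) mod p)"
      by (simp add: P_def fps_to_fls_power)
    hence "(1 + fls_X :: 'k fls)^((p - i) mod p) * fps_to_fls h = fps_to_fls (P * h)"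
      by (simp add: fls_times_fps_to_fls)
    thus ?thesis by simp
  qed
  also have "\<dots> = (\<Sum>b<p. of_nat (b choose i) * (-1)^(b-i) * h $ b)"
    by (rule Tc[OF assms(1,2,4)])
  finally show ?thesis .
qed




lemma theta_inv:
  fixes lam :: "'k::field" and h :: "'k fps"
  assumes "prime p" "CHAR('k) = p" "lam \<noteq> 0" "i < p"
    and "j \<in> padic_int p" "j 1 = int i"
    and "snd (y 0) = fps_to_fls h"
  shows "theta (act_inv_pj p r s lam j y) = lam * (\<Sum>b<p. of_nat (b choose i) * (-1)^(b-i) * h $ b)"
  unfolding act_inv_pj_def
  by (rule theta_gen[where y=y and h=h and zz="padic_neg p j", OF assms(1-4) zcond_neg[OF assms(1,5,6)] assms(7)])

lemma inner_AF:
  assumes "b < p"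
  shows "(\<Sum>i<p. (- of_nat i)^m * (of_nat (b choose i) * (-1)^(b-i)) :: 'k::comm_ring_1)
       = (-1)^m * (-1)^b * AF b m"
proof -
  have "(\<Sum>i<p. (- of_nat i)^m * (of_nat (b choose i) * (-1)^(b-i)) :: 'k)
      = (\<Sum>i\<le>b. (- of_nat i)^m * (of_nat (b choose i) * (-1)^(b-i)))"
  proof (rule sum.mono_neutral_right)
    show "\<forall>i\<in>{..<p} - {..b}. (- of_nat i)^m * (of_nat (b choose i) * (-1)^(b-i)) = (0::'k)"
      by (auto simp: binomial_eq_0)
  qed (use assms in auto)
  also have "\<dots> = (\<Sum>i\<le>b. (-1)^m * (-1)^b * ((-1)^i * of_nat (b choose i) * of_nat i ^ m))"
  proof (intro sum.cong refl)
    fix i assume "i \<in> {..b}"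
    hence ib: "i \<le> b" by simp
    have e1: "(-1::'k)^(b-i) = (-1)^b * (-1)^i"
    proof -
      have bb: "b = (b - i) + i" using ib by simp
      have "(-1::'k)^b = (-1)^(b-i) * (-1)^i" by (subst bb) (rule power_add)
      hence "(-1::'k)^b * (-1)^i = (-1)^(b-i) * ((-1)^i * (-1)^i)" by (simp only: mult.assoc)
      also have "(-1::'k)^i * (-1)^i = ((-1) * (-1))^i" by (rule power_mult_distrib[symmetric])
      also have "((-1::'k) * (-1))^i = 1" by simp
      finally show ?thesis by simp
    qed
    have e2: "(- of_nat i :: 'k)^m = (-1)^m * of_nat i ^ m"
      by (subst power_mult_distrib[symmetric]) simp
    show "(- of_nat i)^m * (of_nat (b choose i) * (-1)^(b-i)) =
        (-1)^m * (-1)^b * ((-1)^i * of_nat (b choose i) * (of_nat i :: 'k) ^ m)"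
      unfolding e1 e2 by (simp only: mult_ac)
  qed
  also have "\<dots> = (-1)^m * (-1)^b * AF b m" by (simp only: AF_def sum_distrib_left)
  finally show ?thesis .
qed
lemma swap_sum:
  "(\<Sum>i<p. f i * (lam * (\<Sum>b<p. c b i * h b))) = lam * (\<Sum>b<p. h b * (\<Sum>i<p. f i * c b i :: 'k::field))"
proof -
  have "(\<Sum>i<p. f i * (lam * (\<Sum>b<p. c b i * h b))) = (\<Sum>i<p. \<Sum>b<p. lam * (h b * (f i * c b i)))"
    by (simp add: sum_distrib_left mult_ac)
  also have "\<dots> = (\<Sum>b<p. \<Sum>i<p. lam * (h b * (f i * c b i)))" by (rule sum.swap)
  also have "\<dots> = lam * (\<Sum>b<p. h b * (\<Sum>i<p. f i * c b i))" by (simp add: sum_distrib_left)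
  finally show ?thesis .
qed





lemma dsharp_decomp:
  assumes "v \<in> Dsharp r"
  obtains a h where "v = (a, fps_to_fls h)" "\<forall>n<0. a $$ n = 0" "\<forall>k<r. h $ k = (0::'k::field)"
proof -
  obtain a b where v: "v = (a, b)" by (cases v)
  have a: "fls_subdegree a \<ge> 0" and b: "b = 0 \<or> fls_subdegree b \<ge> int r"
    using assms v by (auto simp: Dsharp_def)
  have a0: "\<forall>n<0. a $$ n = 0"
  proof (intro allI impI)
    fix n :: int assume "n < 0"
    thus "a $$ n = 0" using a by (intro fls_eq0_below_subdegree) simp
  qed
  have bl: "\<forall>n<int r. b $$ n = 0"
  proof (intro allI impI)
    fix n :: int assume n: "n < int r"
    show "b $$ n = 0"
    proof (cases "b = 0")
      case False
      thus ?thesis using b n by (intro fls_eq0_below_subdegree) auto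
    qed simp
  qed
  have "fps_to_fls (fls_regpart b) = b"
    by (rule regpart_eq) (use bl in auto)
  moreover have "\<forall>k<r. fls_regpart b $ k = 0" using bl by simp
  ultimately show ?thesis using that[of a "fls_regpart b"] v a0 by auto
qed

lemma part2:
  fixes lam :: "'k::field"
  assumes "prime p" "CHAR('k) = p" "lam \<noteq> 0" "r < p"
    and JJ: "\<forall>i<p. J i \<in> padic_int p \<and> J i 1 = int i"
    and "m < r" "y \<in> projlim p r lam"
  shows "(\<Sum>i<p. (- of_int (J i 1))^m * theta (act_inv_pj p r s lam (J i) y)) = (0::'k)"
proof -
  have "y 0 \<in> Dsharp r" using assms(7) by (simp add: projlim_def)
  then obtain a h where ah: "y 0 = (a, fps_to_fls h)" "\<forall>k<r. h $ k = (0::'k)"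
    by (rule dsharp_decomp)
  have "(\<Sum>i<p. (- of_int (J i 1))^m * theta (act_inv_pj p r s lam (J i) y))
      = (\<Sum>i<p. (- of_nat i)^m * (lam * (\<Sum>b<p. (of_nat (b choose i) * (-1)^(b-i)) * h $ b)))"
  proof (intro sum.cong refl)
    fix i assume i: "i \<in> {..<p}"
    have "theta (act_inv_pj p r s lam (J i) y) = lam * (\<Sum>b<p. of_nat (b choose i) * (-1)^(b-i) * h $ b)"
      using JJ i by (intro theta_inv[OF assms(1-3)]) (auto simp: ah)
    thus "(- of_int (J i 1))^m * theta (act_inv_pj p r s lam (J i) y)
        = (- of_nat i)^m * (lam * (\<Sum>b<p. (of_nat (b choose i) * (-1)^(b-i)) * h $ b))"
      using JJ i by simp
  qed
  also have "\<dots> = lam * (\<Sum>b<p. h $ b * (\<Sum>i<p. (- of_nat i)^m * (of_nat (b choose i) * (-1)^(b-i))))"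
    by (rule swap_sum)
  also have "\<dots> = lam * (\<Sum>b<p. h $ b * ((-1)^m * (-1)^b * AF b m))"
    by (simp add: inner_AF)
  also have "(\<Sum>b<p. h $ b * ((-1)^m * (-1)^b * AF b m)) = 0"
  proof (intro sum.neutral ballI)
    fix b assume "b \<in> {..<p}"
    show "h $ b * ((-1)^m * (-1)^b * AF b m) = 0"
    proof (cases "b < r")
      case True thus ?thesis using ah(2) by simp
    next
      case False
      hence "m < b" using assms(6) by simp
      hence "AF b m = (0::'k)" using AF_vals[of b] by blast
      thus ?thesis by simp
    qed
  qed
  finally show ?thesis by simp
qed

lemma shiftX_nth:
  "(fls_const c * fls_X^N * A) $$ k = c * A $$ (k - int N)"
proof -
  have "fls_const c * fls_X^N * A = fls_const c * (fls_X^N * A)" by (simp only: mult.assoc)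
  thus ?thesis by (simp only: fls_mult_const_nth fls_X_power_times_conv_shift fls_shift_nth) simp
qed

lemma part1:
  fixes lam :: "'k::field"
  assumes "prime p" "CHAR('k) = p" "lam \<noteq> 0"
    and JJ: "\<forall>i<p. J i \<in> padic_int p \<and> J i 1 = int i"
    and "y \<in> projlim p 0 lam"
  shows "theta (act_diag_ppow p 0 lam (-1) y) + (\<Sum>i<p. theta (act_inv_pj p 0 s lam (J i) y)) = (0::'k)"
proof -
  have p0: "p > 0" using assms prime_gt_0_nat by blast
  have "y 0 \<in> Dsharp 0" using assms(5) by (simp add: projlim_def)
  then obtain a h where ah: "y 0 = (a, fps_to_fls h)"
    by (rule dsharp_decomp)
  have "y 1 \<in> Dsharp 0" using assms(5) by (simp add: projlim_def)
  then obtain A1 h1 where A1: "y 1 = (A1, fps_to_fls h1)" "\<forall>n<0. A1 $$ n = 0"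
    by (rule dsharp_decomp)
  have "psi_D p 0 lam (y (Suc 0)) = y 0" using assms(5) unfolding projlim_def by blast
  hence "y 0 = psi_D p 0 lam (y 1)" by simp
  hence "fps_to_fls h = psi_fls p (fls_const (- inverse lam) * fls_X^(p-1) * A1)"
    using ah A1 by (simp add: psiD_eq[OF assms(3)])
  hence "h $ 0 = psi_fls p (fls_const (- inverse lam) * fls_X^(p-1) * A1) $$ 0"
    by (metis fps_to_fls_nth less_irrefl nat_0)
  also have "\<dots> = (\<Sum>m<p. (-1)^m * (fls_const (- inverse lam) * fls_X^(p-1) * A1) $$ (int p * 0 + int m))"
    by (rule psi_nth[OF assms(1,2)])
  also have "\<dots> = (\<Sum>m<p. (-1)^m * (- inverse lam * A1 $$ (int m - int (p-1))))"
    by (simp only: shiftX_nth mult_zero_right add_0)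
  also have "\<dots> = (\<Sum>m<p. if m = p - 1 then (-1)^(p-1) * (- inverse lam * A1 $$ 0) else 0)"
  proof (intro sum.cong refl)
    fix m assume m: "m \<in> {..<p}"
    show "(-1)^m * (- inverse lam * A1 $$ (int m - int (p-1))) =
        (if m = p - 1 then (-1)^(p-1) * (- inverse lam * A1 $$ 0) else 0)"
    proof (cases "m = p - 1")
      case False
      hence "int m - int (p-1) < 0" using m by auto
      thus ?thesis using False A1(2) by simp
    qed simp
  qed
  also have "\<dots> = - inverse lam * A1 $$ 0" using p0 minus_one_pow_pm1[OF assms(1,2)] by simp
  finally have h0: "h $ 0 = - inverse lam * A1 $$ 0" .
  have y1: "y (Suc 0) = (A1, fps_to_fls h1)" using A1(1) by simp
  have th1: "theta (act_diag_ppow p 0 lam (-1) y) = A1 $$ 0"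
    by (simp add: theta_def act_diag_ppow_def y1)
  have "(\<Sum>i<p. theta (act_inv_pj p 0 s lam (J i) y))
      = (\<Sum>i<p. (- of_nat i)^0 * (lam * (\<Sum>b<p. (of_nat (b choose i) * (-1)^(b-i)) * h $ b)))"
  proof (intro sum.cong refl)
    fix i assume i: "i \<in> {..<p}"
    have "theta (act_inv_pj p 0 s lam (J i) y) = lam * (\<Sum>b<p. of_nat (b choose i) * (-1)^(b-i) * h $ b)"
      using JJ i by (intro theta_inv[OF assms(1-3)]) (auto simp: ah)
    thus "theta (act_inv_pj p 0 s lam (J i) y)
        = (- of_nat i)^0 * (lam * (\<Sum>b<p. (of_nat (b choose i) * (-1)^(b-i)) * h $ b))"
      by simp
  qed
  also have "\<dots> = lam * (\<Sum>b<p. h $ b * (\<Sum>i<p. (- of_nat i)^0 * (of_nat (b choose i) * (-1)^(b-i))))"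
    by (rule swap_sum)
  also have "\<dots> = lam * (\<Sum>b<p. h $ b * ((-1)^0 * (-1)^b * AF b 0))"
  proof (intro arg_cong[of _ _ "\<lambda>x. lam * x"] sum.cong refl)
    fix b assume "b \<in> {..<p}"
    hence "b < p" by simp
    from inner_AF[OF this, of 0, where 'k='k]
    show "h $ b * (\<Sum>i<p. (- of_nat i)^0 * (of_nat (b choose i) * (-1)^(b-i))) = h $ b * ((-1)^0 * (-1)^b * AF b 0)"
      by simp
  qed
  also have "(\<Sum>b<p. h $ b * ((-1)^0 * (-1)^b * AF b 0)) = (\<Sum>b<p. if b = 0 then h $ 0 else 0)"
  proof (intro sum.cong refl)
    fix b assume "b \<in> {..<p}"
    show "h $ b * ((-1)^0 * (-1)^b * AF b 0) = (if b = 0 then h $ 0 else 0)"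
    proof (cases "b = 0")
      case True thus ?thesis by (simp add: AF_def)
    next
      case False
      hence "AF b 0 = (0::'k)" using AF_vals[of b] by blast
      thus ?thesis using False by simp
    qed
  qed
  also have "\<dots> = h $ 0" using p0 by simp
  finally show ?thesis using th1 h0 assms(3) by simp
qed




definition Bi :: "nat \<Rightarrow> nat \<Rightarrow> 'k::field fps" where
  "Bi p i = binom_pow (padic_mult_ppow p 0 (padic_of_int p (- int i)))"

lemma Bi_nth:
  assumes "prime p" "CHAR('k::field) = p" "e < p" "i < p"
  shows "(Bi p i :: 'k fps) $ e = of_nat ((p - i) mod p choose e)"
  unfolding Bi_def
  by (simp add: binom_pow_nth_lt[OF assms zcond_int[OF assms(1)]] Ypow_nth)

lemma Gsum:
  fixes ls :: "nat \<Rightarrow> 'k::field" and \<alpha> :: "'k fps"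
  assumes "prime p" "CHAR('k) = p" "r < p" "k \<le> r"
    and orth: "\<forall>l<r. (\<Sum>i<p. of_nat i ^ l * ls i) = 0"
  shows "(\<Sum>i<p. ls i * (Bi p i * \<alpha>) $ k)
     = (if k = r then \<alpha> $ 0 * ((-1)^r / of_nat (fact r) * (\<Sum>i<p. ls i * of_nat i ^ r)) else 0)"
proof -
  have "(\<Sum>i<p. ls i * (Bi p i * \<alpha>) $ k)
      = (\<Sum>i<p. ls i * (\<Sum>e=0..k. of_nat ((p - i) mod p choose e) * \<alpha> $ (k - e)))"
    unfolding fps_mult_nth
    by (intro sum.cong refl arg_cong[of _ _ "\<lambda>x. ls _ * x"]) (use assms in \<open>simp add: Bi_nth\<close>)
  also have "\<dots> = (\<Sum>e=0..k. \<alpha> $ (k - e) * (\<Sum>i<p. ls i * of_nat ((p - i) mod p choose e)))"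
  proof -
    have "(\<Sum>i<p. ls i * (\<Sum>e=0..k. of_nat ((p - i) mod p choose e) * \<alpha> $ (k - e)))
        = (\<Sum>i<p. \<Sum>e=0..k. \<alpha> $ (k - e) * (ls i * of_nat ((p - i) mod p choose e)))"
      by (simp add: sum_distrib_left mult_ac)
    also have "\<dots> = (\<Sum>e=0..k. \<Sum>i<p. \<alpha> $ (k - e) * (ls i * of_nat ((p - i) mod p choose e)))"
      by (rule sum.swap)
    also have "\<dots> = (\<Sum>e=0..k. \<alpha> $ (k - e) * (\<Sum>i<p. ls i * of_nat ((p - i) mod p choose e)))"
      by (simp add: sum_distrib_left)
    finally show ?thesis .
  qed
  also have "\<dots> = (\<Sum>e=0..k. if e = r then \<alpha> $ 0 * ((-1)^r / of_nat (fact r) * (\<Sum>i<p. ls i * of_nat i ^ r)) else 0)"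
  proof (intro sum.cong refl)
    fix e assume e: "e \<in> {0..k}"
    hence er: "e \<le> r" using assms(4) by simp
    show "\<alpha> $ (k - e) * (\<Sum>i<p. ls i * of_nat ((p - i) mod p choose e))
        = (if e = r then \<alpha> $ 0 * ((-1)^r / of_nat (fact r) * (\<Sum>i<p. ls i * of_nat i ^ r)) else 0)"
      using orth_binom[OF assms(1,2) er assms(3) orth] e assms(4) by auto
  qed
  also have "\<dots> = (if k = r then \<alpha> $ 0 * ((-1)^r / of_nat (fact r) * (\<Sum>i<p. ls i * of_nat i ^ r)) else 0)"
    using assms(4) by auto
  finally show ?thesis .
qed




lemma Zsnd:
  fixes lam :: "'k::field"
  assumes "lam \<noteq> 0" "y 0 = (a, b)" "\<forall>n<0. a $$ n = 0"
  shows "snd (act_diag_ppow p r lam 1 (act_unip p (padic_of_int p (- int i)) y) 0)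
       = psi_fls p (fls_const (- inverse lam) * fls_X^((r+1)*(p-1)) * fps_to_fls (Bi p i * fls_regpart a))"
proof -
  have a: "fps_to_fls (fls_regpart a) = a" by (rule regpart_eq) (use assms(3) in auto)
  have "fps_to_fls (Bi p i * fls_regpart a) = fps_to_fls (Bi p i) * a"
    by (simp add: fls_times_fps_to_fls a)
  thus ?thesis using assms(2)
    by (simp add: act_diag_ppow_def act_unip_def dsc_def Bi_def psiD_eq[OF assms(1)])
qed

lemma part3:
  fixes lam :: "'k::field" and ls :: "nat \<Rightarrow> 'k"
  assumes "prime p" "CHAR('k) = p" "lam \<noteq> 0" "1 \<le> r" "r < p"
    and JJ: "\<forall>i<p. J i \<in> padic_int p \<and> J i 1 = int i"
    and orth: "\<forall>l<r. (\<Sum>i<p. of_nat i ^ l * ls i) = 0"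
    and yp: "y \<in> projlim p r lam"
  shows "(\<Sum>i<p. ls i * of_nat i ^ r) * theta y
          + (\<Sum>i<p. ls i * (\<Sum>jj<p. (- of_int (J jj 1)) ^ r *
               theta (act_inv_pj p r s lam (J jj)
                 (act_diag_ppow p r lam 1 (act_unip p (padic_of_int p (- int i)) y))))) = 0"
proof -
  have p0: "p > 0" using assms prime_gt_0_nat by blast
  define N where "N = (r+1)*(p-1)"
  define L where "L = (\<Sum>i<p. ls i * of_nat i ^ r)"
  define c :: 'k where "c = (-1)^r / of_nat (fact r)"
  define Cst :: 'k where "Cst = (-1)^r * (-1)^r * AF r r"
  define Z where "Z i = act_diag_ppow p r lam 1 (act_unip p (padic_of_int p (- int i)) y)" for i
  have intN: "int N = int p * int r + int p - int r - 1"
  proof -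
    have "int N = int (r+1) * int (p-1)" unfolding N_def by (rule of_nat_mult)
    also have "int (p-1) = int p - 1" using p0 by simp
    finally show ?thesis by (simp add: algebra_simps)
  qed
  have "y 0 \<in> Dsharp r" using yp by (simp add: projlim_def)
  then obtain a h where y0: "y 0 = (a, fps_to_fls h)" "\<forall>n<0. a $$ n = (0::'k)"
    by (rule dsharp_decomp)
  define \<alpha> where "\<alpha> = fls_regpart a"
  have a\<alpha>: "a = fps_to_fls \<alpha>" unfolding \<alpha>_def by (rule regpart_eq[symmetric]) (use y0 in auto)
  define Hf where "Hf i = psi_fls p (fls_const (- inverse lam) * fls_X^N * fps_to_fls (Bi p i * \<alpha>))" for i
  have Zs: "snd (Z i 0) = Hf i" for i
    unfolding Z_def Hf_def N_def \<alpha>_def by (rule Zsnd[where y=y, OF assms(3) y0(1) y0(2)])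
  have Hn: "Hf i $$ n = (\<Sum>m<p. (-1)^m * (- inverse lam * fps_to_fls (Bi p i * \<alpha>) $$ (int p * n + int m - int N)))" for i n
    unfolding Hf_def psi_nth[OF assms(1,2)] by (simp only: shiftX_nth)
  have Hz: "Hf i $$ n = 0" if "int p * n + int p \<le> int N" for i n
    unfolding Hn using that by (intro sum.neutral ballI) auto
  define hf where "hf i = fls_regpart (Hf i)" for i
  have Hh: "Hf i = fps_to_fls (hf i)" for i
    unfolding hf_def
  proof (rule regpart_eq[symmetric], intro allI impI)
    fix n :: int assume "n < 0"
    hence "int p * n \<le> int p * (-1)" using p0 by (intro mult_left_mono) auto
    thus "Hf i $$ n = 0" by (intro Hz) simp
  qed
  have hlow: "hf i $ b = 0" if "b < r" for i b
  proof -
    have "int p * int b + int p \<le> int p * int r" using that p0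
    proof -
      have "int p * (int b + 1) \<le> int p * int r" using that by (intro mult_left_mono) auto
      thus ?thesis by (simp add: algebra_simps)
    qed
    moreover note intN
    ultimately have "int p * int b + int p \<le> int N" using assms(5) by linarith
    hence "Hf i $$ int b = 0" by (rule Hz)
    thus ?thesis by (simp add: Hh)
  qed
  have inner: "(\<Sum>jj<p. (- of_int (J jj 1))^r * theta (act_inv_pj p r s lam (J jj) (Z i))) = lam * (hf i $ r * Cst)" for i
  proof -
    have "(\<Sum>jj<p. (- of_int (J jj 1))^r * theta (act_inv_pj p r s lam (J jj) (Z i)))
        = (\<Sum>jj<p. (- of_nat jj)^r * (lam * (\<Sum>b<p. (of_nat (b choose jj) * (-1)^(b-jj)) * hf i $ b)))"
    proof (intro sum.cong refl)
      fix jj assume jj: "jj \<in> {..<p}"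
      have sz: "snd (Z i 0) = fps_to_fls (hf i)" using Zs Hh by simp
      have "theta (act_inv_pj p r s lam (J jj) (Z i)) = lam * (\<Sum>b<p. of_nat (b choose jj) * (-1)^(b-jj) * hf i $ b)"
        using JJ jj by (intro theta_inv[where y="Z i", OF assms(1-3) _ _ _ sz]) auto
      thus "(- of_int (J jj 1))^r * theta (act_inv_pj p r s lam (J jj) (Z i))
          = (- of_nat jj)^r * (lam * (\<Sum>b<p. (of_nat (b choose jj) * (-1)^(b-jj)) * hf i $ b))"
        using JJ jj by simp
    qed
    also have "\<dots> = lam * (\<Sum>b<p. hf i $ b * (\<Sum>jj<p. (- of_nat jj)^r * (of_nat (b choose jj) * (-1)^(b-jj))))"
      by (rule swap_sum)
    also have "\<dots> = lam * (\<Sum>b<p. if b = r then hf i $ r * Cst else 0)"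
    proof (intro arg_cong[of _ _ "\<lambda>x. lam * x"] sum.cong refl)
      fix b assume "b \<in> {..<p}"
      hence bp: "b < p" by simp
      have "hf i $ b * (\<Sum>jj<p. (- of_nat jj)^r * (of_nat (b choose jj) * (-1)^(b-jj)))
          = hf i $ b * ((-1)^r * (-1)^b * AF b r)" by (simp only: inner_AF[OF bp])
      also have "\<dots> = (if b = r then hf i $ r * Cst else 0)"
      proof (cases "b < r")
        case True thus ?thesis using hlow by simp
      next
        case False
        show ?thesis
        proof (cases "b = r")
          case True thus ?thesis by (simp add: Cst_def)
        next
          case ne: False
          hence "r < b" using False by simp
          hence "AF b r = (0::'k)" using AF_vals[of b] by blast
          thus ?thesis using ne by simp
        qed
      qed
      finally show "hf i $ b * (\<Sum>jj<p. (- of_nat jj)^r * (of_nat (b choose jj) * (-1)^(b-jj)))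
          = (if b = r then hf i $ r * Cst else 0)" .
    qed
    also have "\<dots> = lam * (hf i $ r * Cst)" using assms(5) by simp
    finally show ?thesis .
  qed
  have hr: "hf i $ r = (\<Sum>m<p. (-1)^m * (- inverse lam * fps_to_fls (Bi p i * \<alpha>) $$ (int m + int r + 1 - int p)))" for i
  proof -
    have "hf i $ r = Hf i $$ int r" by (simp add: Hh)
    also have "\<dots> = (\<Sum>m<p. (-1)^m * (- inverse lam * fps_to_fls (Bi p i * \<alpha>) $$ (int p * int r + int m - int N)))"
      by (rule Hn)
    also have "\<dots> = (\<Sum>m<p. (-1)^m * (- inverse lam * fps_to_fls (Bi p i * \<alpha>) $$ (int m + int r + 1 - int p)))"
    proof -
      have idx: "\<And>m. int p * int r + int m - int N = int m + int r + 1 - int p" using intN by simp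
      show ?thesis by (simp only: idx)
    qed
    finally show ?thesis .
  qed
  have inner2: "(\<Sum>i<p. ls i * fps_to_fls (Bi p i * \<alpha>) $$ (int m + int r + 1 - int p))
       = (if m = p - 1 then \<alpha> $ 0 * (c * L) else 0)" if mp: "m < p" for m
  proof (cases "int m + int r + 1 - int p < 0")
    case True
    hence "m \<noteq> p - 1" using p0 by auto
    thus ?thesis using True by simp
  next
    case False
    define k where "k = nat (int m + int r + 1 - int p)"
    have ik: "int k = int m + int r + 1 - int p" using False by (simp add: k_def)
    have kr: "k \<le> r" using ik mp by simp
    have "(\<Sum>i<p. ls i * fps_to_fls (Bi p i * \<alpha>) $$ (int m + int r + 1 - int p)) = (\<Sum>i<p. ls i * (Bi p i * \<alpha>) $ k)"
      unfolding ik[symmetric] by simp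
    also have "\<dots> = (if k = r then \<alpha> $ 0 * (c * L) else 0)"
      unfolding Gsum[OF assms(1,2,5) kr orth] c_def L_def by simp
    also have "(k = r) = (m = p - 1)" using ik mp p0 by auto
    finally show ?thesis .
  qed
  have sum2: "(\<Sum>i<p. ls i * hf i $ r) = (-1)^(p-1) * (- inverse lam) * (\<alpha> $ 0 * (c * L))"
  proof -
    have "(\<Sum>i<p. ls i * hf i $ r)
        = (\<Sum>i<p. \<Sum>m<p. (-1)^m * (- inverse lam) * (ls i * fps_to_fls (Bi p i * \<alpha>) $$ (int m + int r + 1 - int p)))"
      by (simp add: hr sum_distrib_left mult_ac)
    also have "\<dots> = (\<Sum>m<p. \<Sum>i<p. (-1)^m * (- inverse lam) * (ls i * fps_to_fls (Bi p i * \<alpha>) $$ (int m + int r + 1 - int p)))"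
      by (rule sum.swap)
    also have "\<dots> = (\<Sum>m<p. (-1)^m * (- inverse lam) * (if m = p - 1 then \<alpha> $ 0 * (c * L) else 0))"
    proof (intro sum.cong refl)
      fix m assume "m \<in> {..<p}"
      hence mp: "m < p" by simp
      have "(\<Sum>i<p. (-1)^m * (- inverse lam) * (ls i * fps_to_fls (Bi p i * \<alpha>) $$ (int m + int r + 1 - int p)))
          = (-1)^m * (- inverse lam) * (\<Sum>i<p. ls i * fps_to_fls (Bi p i * \<alpha>) $$ (int m + int r + 1 - int p))"
        by (rule sum_distrib_left[symmetric])
      also have "\<dots> = (-1)^m * (- inverse lam) * (if m = p - 1 then \<alpha> $ 0 * (c * L) else 0)"
        by (simp only: inner2[OF mp])
      finally show "(\<Sum>i<p. (-1)^m * (- inverse lam) * (ls i * fps_to_fls (Bi p i * \<alpha>) $$ (int m + int r + 1 - int p)))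
          = (-1)^m * (- inverse lam) * (if m = p - 1 then \<alpha> $ 0 * (c * L) else 0)" .
    qed
    also have "\<dots> = (\<Sum>m<p. if m = p - 1 then (-1)^(p-1) * (- inverse lam) * (\<alpha> $ 0 * (c * L)) else 0)"
      by (intro sum.cong refl) auto
    also have "\<dots> = (-1)^(p-1) * (- inverse lam) * (\<alpha> $ 0 * (c * L))"
      by (subst sum.delta) (use p0 in auto)
    finally show ?thesis .
  qed
  have thy: "theta y = \<alpha> $ 0" by (simp add: theta_def y0 a\<alpha>)
  have Cc: "Cst * c = 1"
  proof -
    have "AF r r = ((-1)^r * of_nat (fact r) :: 'k)" using AF_vals by blast
    moreover have "(of_nat (fact r) :: 'k) \<noteq> 0" by (rule fact_nonzero_char[OF assms(1,2,5)])
    ultimately have "Cst * c = ((-1)^r * (-1)^r) * ((-1)^r * (-1)^r)"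
      by (simp add: Cst_def c_def field_simps)
    also have "\<dots> = 1" by (simp flip: power_mult_distrib)
    finally show ?thesis .
  qed
  have "(\<Sum>i<p. ls i * (\<Sum>jj<p. (- of_int (J jj 1))^r * theta (act_inv_pj p r s lam (J jj) (Z i))))
      = (\<Sum>i<p. ls i * (lam * (hf i $ r * Cst)))"
    by (intro sum.cong refl) (simp only: inner)
  also have "\<dots> = lam * Cst * (\<Sum>i<p. ls i * hf i $ r)"
    by (simp add: sum_distrib_left mult_ac)
  also have "\<dots> = - (\<alpha> $ 0 * L)"
  proof -
    have s2: "(\<Sum>i<p. ls i * hf i $ r) = - inverse lam * (\<alpha> $ 0 * (c * L))"
      by (simp only: sum2 minus_one_pow_pm1[OF assms(1,2)] mult_1_left)
    have "lam * Cst * (- inverse lam * (\<alpha> $ 0 * (c * L))) = - ((lam * inverse lam) * (Cst * c) * (\<alpha> $ 0 * L))"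
      by (simp only: mult_ac mult_minus_left mult_minus_right)
    also have "\<dots> = - (\<alpha> $ 0 * L)" using Cc assms(3) by simp
    finally show ?thesis by (simp only: s2)
  qed
  finally have "(\<Sum>i<p. ls i * (\<Sum>jj<p. (- of_int (J jj 1))^r * theta (act_inv_pj p r s lam (J jj) (Z i))))
      = - (\<alpha> $ 0 * L)" .
  thus ?thesis by (simp add: Z_def thy L_def mult_ac)
qed


theorem mainTheorem8:
  fixes p r s :: nat and lam :: "'k::field" and J :: "nat \<Rightarrow> (nat \<Rightarrow> int)"
  assumes "prime p" and "CHAR('k) = p" and "finite (UNIV :: 'k set)"
    and "r < p" and "lam \<noteq> 0"
    and "\<forall>i<p. J i \<in> padic_int p \<and> J i 1 = int i"
  shows
   "(r = 0 \<longrightarrow> (\<forall>y \<in> projlim p r lam.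
        theta (act_diag_ppow p r lam (-1) y)
        + (\<Sum>i<p. theta (act_inv_pj p r s lam (J i) y)) = 0))
    \<and> (1 \<le> r \<longrightarrow> (\<forall>m<r. \<forall>y \<in> projlim p r lam.
        (\<Sum>i<p. (- of_int (J i 1)) ^ m * theta (act_inv_pj p r s lam (J i) y)) = (0::'k)))
    \<and> (1 \<le> r \<longrightarrow> (\<forall>ls :: nat \<Rightarrow> 'k. (\<forall>l<r. (\<Sum>i<p. of_nat i ^ l * ls i) = 0) \<longrightarrow>
        (\<forall>y \<in> projlim p r lam.
          (\<Sum>i<p. ls i * of_nat i ^ r) * theta y
          + (\<Sum>i<p. ls i * (\<Sum>jj<p. (- of_int (J jj 1)) ^ r *
               theta (act_inv_pj p r s lam (J jj)
                 (act_diag_ppow p r lam 1 (act_unip p (padic_of_int p (- int i)) y))))) = 0)))"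
  proof -
  have r0: "r = 0 \<longrightarrow> (\<forall>y \<in> projlim p r lam.
        theta (act_diag_ppow p r lam (-1) y)
        + (\<Sum>i<p. theta (act_inv_pj p r s lam (J i) y)) = 0)"
    using part1[OF assms(1,2,5,6)] by blast
  have r1: "1 \<le> r \<longrightarrow> (\<forall>m<r. \<forall>y \<in> projlim p r lam.
        (\<Sum>i<p. (- of_int (J i 1)) ^ m * theta (act_inv_pj p r s lam (J i) y)) = (0::'k))"
    using part2[OF assms(1,2,5,4,6)] by blast
  have r2: "1 \<le> r \<longrightarrow> (\<forall>ls :: nat \<Rightarrow> 'k. (\<forall>l<r. (\<Sum>i<p. of_nat i ^ l * ls i) = 0) \<longrightarrow>
        (\<forall>y \<in> projlim p r lam.
          (\<Sum>i<p. ls i * of_nat i ^ r) * theta y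
          + (\<Sum>i<p. ls i * (\<Sum>jj<p. (- of_int (J jj 1)) ^ r *
               theta (act_inv_pj p r s lam (J jj)
                 (act_diag_ppow p r lam 1 (act_unip p (padic_of_int p (- int i)) y))))) = 0))"
    using part3[OF assms(1,2,5) _ assms(4,6)] by blast
  show ?thesis using r0 r1 r2 by blast
qed

end
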